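(* Let $E: y^2=x^3+Ax^2+Bx$ ($A,B\in\mathbb{Z}$) with $E(\mathbb{Q})[2]\simeq\mathbb{Z}/2\mathbb{Z}$, let $d$ be squarefree and $p$ a prime with $p\mid d$ and $\gcd(p,2\Delta)=1$. Then $$W_p^d=\begin{cases}\langle d(A+2\sqrt{B})\rangle & \text{if } p \text{ is of type 1},\\ 1 & \text{if } p \text{ is of type 2},\\ \mathbb{Q}_p^\times/(\mathbb{Q}_p^\times)^2 & \text{if } p \text{ is of type 3},\\ \mathbb{Z}_p^\times/(\mathbb{Z}_p^\times)^2 & \text{if } p \text{ is of type 4}.\end{cases}$$
   Context: $\Delta$ is the discriminant of $E$ and $\Delta'$ that of $E': y^2=x^3-2Ax^2+(A^2-4B)x$ (up to squares $\Delta\equiv A^2-4B$, $\Delta'\equiv B$). $\phi:E\to E'$ is the 2-isogeny with kernel $\langle(0,0)\rangle$, $E^d,E'^d$ the quadratic twists by $d$, and $W_p^d=\kappa_p(E'^d(\mathbb{Q}_p)/\phi(E^d(\mathbb{Q}_p)))\subset\mathbb{Q}_p^\times/(\mathbb{Q}_p^\times)^2$ is the image of the local Kummer map. For a prime $p\nmid 2\Delta$: $p$ is of type 1 if $(\Delta/p)=1,(\Delta'/p)=1$; type 2 if $(\Delta/p)=1,(\Delta'/p)=-1$; type 3 if $(\Delta/p)=-1,(\Delta'/p)=1$; type 4 if $(\Delta/p)=-1,(\Delta'/p)=-1$. In type 1, $\sqrt{B}\in\mathbb{Q}_p$. *)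

theory Defs
  imports Complex_Main "HOL-Number_Theory.Number_Theory" "HOL-Computational_Algebra.Squarefree"
begin

definition padic_val_rat :: "nat \<Rightarrow> rat \<Rightarrow> int" where
  "padic_val_rat p q = (case quotient_of q of (a, b) \<Rightarrow>
      int (multiplicity (int p) a) - int (multiplicity (int p) b))"

definition padic_abs :: "nat \<Rightarrow> rat \<Rightarrow> real" where
  "padic_abs p q = (if q = 0 then 0 else real p powr (- real_of_int (padic_val_rat p q)))"

text \<open>Elements of Q_p are represented by p-adic Cauchy sequences of rationals;
  two representatives give the same element iff their difference is p-adically null.\<close>
definition padic_cauchy :: "nat \<Rightarrow> (nat \<Rightarrow> rat) \<Rightarrow> bool" where
  "padic_cauchy p X \<longleftrightarrow>
     (\<forall>e>0. \<exists>N. \<forall>m\<ge>N. \<forall>n\<ge>N. padic_abs p (X m - X n) < e)"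

definition padic_null :: "nat \<Rightarrow> (nat \<Rightarrow> rat) \<Rightarrow> bool" where
  "padic_null p X \<longleftrightarrow> (\<forall>e>0. \<exists>N. \<forall>n\<ge>N. padic_abs p (X n) < e)"

definition Qp_eq :: "nat \<Rightarrow> (nat \<Rightarrow> rat) \<Rightarrow> (nat \<Rightarrow> rat) \<Rightarrow> bool" where
  "Qp_eq p X Y \<longleftrightarrow> padic_null p (\<lambda>n. X n - Y n)"

definition Qp_units :: "nat \<Rightarrow> (nat \<Rightarrow> rat) set" where
  "Qp_units p = {X. padic_cauchy p X \<and> \<not> padic_null p X}"

definition Zp_units :: "nat \<Rightarrow> (nat \<Rightarrow> rat) set" where
  "Zp_units p = {X. padic_cauchy p X \<and> (\<exists>N. \<forall>n\<ge>N. padic_abs p (X n) = 1)}"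

definition Qp_const :: "rat \<Rightarrow> nat \<Rightarrow> rat" where
  "Qp_const c = (\<lambda>n. c)"

definition sq_equiv :: "nat \<Rightarrow> (nat \<Rightarrow> rat) \<Rightarrow> (nat \<Rightarrow> rat) \<Rightarrow> bool" where
  "sq_equiv p X Y \<longleftrightarrow> X \<in> Qp_units p \<and> Y \<in> Qp_units p \<and>
     (\<exists>Z \<in> Qp_units p. Qp_eq p X (\<lambda>n. Y n * (Z n)\<^sup>2))"

definition disc :: "int \<Rightarrow> int \<Rightarrow> int" where
  "disc a b = 16 * b\<^sup>2 * (a\<^sup>2 - 4 * b)"

definition Qp_affine_points :: "nat \<Rightarrow> rat \<Rightarrow> rat \<Rightarrow> ((nat \<Rightarrow> rat) \<times> (nat \<Rightarrow> rat)) set" where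
  "Qp_affine_points p a b = {(X, Y). padic_cauchy p X \<and> padic_cauchy p Y \<and>
      Qp_eq p (\<lambda>n. (Y n)\<^sup>2) (\<lambda>n. (X n)^3 + a * (X n)\<^sup>2 + b * X n)}"

text \<open>Image (as a set of representatives in Q_p^x, closed under the square class relation)
  of the Kummer map E'(Q_p) \<rightarrow> Q_p^x/(Q_p^x)^2 attached to the 2-isogeny
  phi : (y^2 = x^3 + a x^2 + b x) \<rightarrow> E' : (y^2 = x^3 - 2a x^2 + (a^2-4b) x).
  The map sends O to 1, (0,0) to a^2 - 4b, and (x,y) with x \<noteq> 0 to x.\<close>
definition kummer_image :: "nat \<Rightarrow> rat \<Rightarrow> rat \<Rightarrow> (nat \<Rightarrow> rat) set" where
  "kummer_image p a b =
     {u \<in> Qp_units p. sq_equiv p u (Qp_const 1)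
        \<or> sq_equiv p u (Qp_const (a\<^sup>2 - 4 * b))
        \<or> (\<exists>(X, Y) \<in> Qp_affine_points p (-2 * a) (a\<^sup>2 - 4 * b).
              \<not> padic_null p X \<and> sq_equiv p u X)}"

text \<open>W_p^d: the image of the local Kummer map for the twisted isogeny
  phi^d : E^d \<rightarrow> E'^d, with E^d : y^2 = x^3 + dA x^2 + d^2 B x
  (isomorphic to d y^2 = x^3 + A x^2 + B x) and
  E'^d : y^2 = x^3 - 2dA x^2 + d^2 (A^2-4B) x.\<close>
definition W :: "int \<Rightarrow> int \<Rightarrow> int \<Rightarrow> nat \<Rightarrow> (nat \<Rightarrow> rat) set" where
  "W A B d p = kummer_image p (of_int (d * A)) (of_int (d\<^sup>2 * B))"

end

theory Submission
  imports Defs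
begin


locale pp = fixes p :: nat assumes pr: "prime p" and p2: "p > 2"
begin

abbreviation v where "v \<equiv> padic_val_rat p"

lemma prime_int: "prime (int p)" using pr by simp

lemma v_frac:
  assumes "a \<noteq> 0" "b \<noteq> 0"
  shows "v (of_int a / of_int b) = int (multiplicity (int p) a) - int (multiplicity (int p) b)"
proof -
  obtain n e where q: "quotient_of (of_int a / of_int b) = (n, e)" by (cases "quotient_of (of_int a / of_int b :: rat)")
  have e: "e > 0" using quotient_of_denom_pos[OF q] .
  have qe: "(of_int a / of_int b :: rat) = of_int n / of_int e" using quotient_of_div[OF q] .
  then have n: "n \<noteq> 0" using assms e by auto
  from qe have "of_int a * of_int e = (of_int n * of_int b :: rat)" using assms e
    by (simp add: field_simps)
  then have "a * e = n * b" by (metis of_int_eq_iff of_int_mult)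
  then have "multiplicity (int p) (a*e) = multiplicity (int p) (n*b)" by simp
  then have "multiplicity (int p) a + multiplicity (int p) e = multiplicity (int p) n + multiplicity (int p) b"
    using prime_elem_multiplicity_mult_distrib[of "int p"] prime_int assms e n by simp
  then show ?thesis unfolding padic_val_rat_def q by simp
qed

lemma v_int: "a \<noteq> 0 \<Longrightarrow> v (of_int a) = int (multiplicity (int p) a)"
  using v_frac[of a 1] by simp

lemma rat_frac: fixes q :: rat obtains a b where "q = of_int a / of_int b" "b \<noteq> 0" "q \<noteq> 0 \<Longrightarrow> a \<noteq> 0"
proof -
  obtain n e where q: "quotient_of q = (n, e)" by (cases "quotient_of q")
  show ?thesis using that[of n e] quotient_of_div[OF q] quotient_of_denom_pos[OF q] by auto
qed

lemma v_mult: assumes "x \<noteq> 0" "y \<noteq> 0" shows "v (x * y) = v x + v y"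
proof -
  obtain a b where x: "x = of_int a / of_int b" "b \<noteq> 0" "a \<noteq> 0" using rat_frac assms by metis
  obtain c e where y: "y = of_int c / of_int e" "e \<noteq> 0" "c \<noteq> 0" using rat_frac assms by metis
  have "x * y = of_int (a*c) / of_int (b*e)" using x y by simp
  then have "v (x*y) = int (multiplicity (int p) (a*c)) - int (multiplicity (int p) (b*e))"
    using v_frac[of "a*c" "b*e"] x y by simp
  then show ?thesis using x y v_frac prime_elem_multiplicity_mult_distrib[of "int p"] prime_int by simp
qed

lemma v_one[simp]: "v 1 = 0" using v_int[of 1] by simp

lemma v_inverse: "x \<noteq> 0 \<Longrightarrow> v (inverse x) = - v x"
  using v_mult[of x "inverse x"] by simp

lemma v_divide: "x \<noteq> 0 \<Longrightarrow> y \<noteq> 0 \<Longrightarrow> v (x / y) = v x - v y"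
  using v_mult[of x "inverse y"] v_inverse[of y] by (simp add: divide_inverse)

lemma v_power: "x \<noteq> 0 \<Longrightarrow> v (x ^ n) = int n * v x"
  by (induction n) (auto simp: v_mult algebra_simps)

lemma v_p: "v (of_nat p) = 1"
  using v_int[of "int p"] pr multiplicity_prime[of "int p"] prime_int by simp

lemma v_uminus: "v (- x) = v x"
proof (cases "x = 0")
  case False then show ?thesis using v_mult[of "-1" x] v_int[of "-1"] by simp
qed simp


lemma mult_ge_dvd: "a \<noteq> 0 \<Longrightarrow> (int p)^m dvd a \<Longrightarrow> m \<le> multiplicity (int p) a"
  using multiplicity_geI[of a "int p" m] prime_int not_prime_unit by blast

lemma not_unit_p: "\<not> is_unit (int p)" using prime_int not_prime_unit by blast

lemma arith_aux: "(M::int) \<ge> min (A+E) (C+B) \<Longrightarrow> V = M - B - E \<Longrightarrow> X = A - B \<Longrightarrow> Y = C - E \<Longrightarrow> min X Y \<le> V"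
  unfolding min_def by (auto split: if_splits)

lemma v_add_ge: assumes "x \<noteq> 0" "y \<noteq> 0" "x + y \<noteq> 0" shows "v (x + y) \<ge> min (v x) (v y)"
proof -
  obtain a b where x: "x = of_int a / of_int b" "b \<noteq> 0" "a \<noteq> 0" using rat_frac assms by metis
  obtain c e where y: "y = of_int c / of_int e" "e \<noteq> 0" "c \<noteq> 0" using rat_frac assms by metis
  let ?m = "multiplicity (int p)"
  have xy: "x + y = of_int (a*e + c*b) / of_int (b*e)" using x y by (simp add: field_simps)
  have s0: "a*e + c*b \<noteq> 0"
  proof
    assume "a*e + c*b = 0" then have "x + y = 0" using xy by simp
    then show False using assms by simp
  qed
  have vxy: "v (x+y) = int (?m (a*e + c*b)) - int (?m (b*e))" using xy v_frac[of "a*e+c*b" "b*e"] s0 x y by simp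
  have me: "?m (a*e) = ?m a + ?m e" "?m (c*b) = ?m c + ?m b" "?m (b*e) = ?m b + ?m e"
    using prime_elem_multiplicity_mult_distrib[of "int p"] prime_int x y by auto
  define m where "m = min (?m (a*e)) (?m (c*b))"
  have "(int p)^m dvd a*e" unfolding m_def using multiplicity_dvd'[of _ "int p" "a*e"] by simp
  moreover have "(int p)^m dvd c*b" unfolding m_def using multiplicity_dvd'[of _ "int p" "c*b"] by simp
  ultimately have "(int p)^m dvd a*e + c*b" by simp
  then have "m \<le> ?m (a*e + c*b)" using mult_ge_dvd s0 by blast
  moreover have "v x = int (?m a) - int (?m b)" using x v_frac by simp
  moreover have "v y = int (?m c) - int (?m e)" using y v_frac by simp
  ultimately have "int (?m (a*e + c*b)) \<ge> min (int (?m a) + int (?m e)) (int (?m c) + int (?m b))"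
    "v (x+y) = int (?m (a*e + c*b)) - int (?m b) - int (?m e)"
    "v x = int (?m a) - int (?m b)" "v y = int (?m c) - int (?m e)"
  proof -
    assume h: "m \<le> ?m (a*e + c*b)" "v x = int (?m a) - int (?m b)" "v y = int (?m c) - int (?m e)"
    have "int m = min (int (?m a) + int (?m e)) (int (?m c) + int (?m b))" unfolding m_def me by simp
    then show "int (?m (a*e + c*b)) \<ge> min (int (?m a) + int (?m e)) (int (?m c) + int (?m b))" using h(1) by linarith
    show "v (x+y) = int (?m (a*e + c*b)) - int (?m b) - int (?m e)" using vxy me by simp
    show "v x = int (?m a) - int (?m b)" "v y = int (?m c) - int (?m e)" using h by auto
  qed
  then show ?thesis using arith_aux by metis
qed

definition vge :: "rat \<Rightarrow> int \<Rightarrow> bool" where "vge x k \<longleftrightarrow> x = 0 \<or> v x \<ge> k"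

lemma vge_0[simp]: "vge 0 k" by (simp add: vge_def)
lemma vge_nz: "x \<noteq> 0 \<Longrightarrow> vge x k \<longleftrightarrow> v x \<ge> k" by (simp add: vge_def)
lemma vge_add: "vge x k \<Longrightarrow> vge y k \<Longrightarrow> vge (x + y) k"
proof -
  assume a: "vge x k" "vge y k"
  show ?thesis
  proof (cases "x = 0 \<or> y = 0 \<or> x + y = 0")
    case True then show ?thesis using a by auto
  next
    case False
    then have "v (x+y) \<ge> min (v x) (v y)" using v_add_ge by blast
    moreover have "v x \<ge> k" "v y \<ge> k" using a False by (auto simp: vge_def)
    ultimately show ?thesis unfolding vge_def by linarith
  qed
qed
lemma vge_uminus[simp]: "vge (- x) k = vge x k" by (simp add: vge_def v_uminus)
lemma vge_diff: "vge x k \<Longrightarrow> vge y k \<Longrightarrow> vge (x - y) k"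
  using vge_add[of x k "-y"] by simp
lemma vge_mono: "vge x k \<Longrightarrow> j \<le> k \<Longrightarrow> vge x j" by (auto simp: vge_def)
lemma vge_mult: "vge x k \<Longrightarrow> vge y j \<Longrightarrow> vge (x * y) (k + j)"
  by (cases "x=0"; cases "y=0") (auto simp: vge_def v_mult)
lemma vge_mult_v: "x \<noteq> 0 \<Longrightarrow> vge y j \<Longrightarrow> vge (x * y) (v x + j)"
  using vge_mult[of x "v x" y j] by (simp add: vge_def)

lemma v_add_lt: assumes "x \<noteq> 0" "vge y (v x + 1)" shows "x + y \<noteq> 0" "v (x + y) = v x"
proof -
  show "x + y \<noteq> 0"
  proof
    assume "x + y = 0" then have "y = -x" by (simp add: add_eq_0_iff)
    then show False using assms by (simp add: vge_def v_uminus)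
  qed
  then have "vge (x + y) (v x)" using vge_add[of x "v x" y] assms vge_mono[of y "v x + 1" "v x"] by (simp add: vge_def)
  then have 1: "v (x+y) \<ge> v x" using \<open>x + y \<noteq> 0\<close> by (simp add: vge_def)
  have "\<not> v (x+y) > v x"
  proof
    assume "v (x+y) > v x"
    then have "vge (x+y) (v x + 1)" using \<open>x + y \<noteq> 0\<close> by (simp add: vge_def)
    then have "vge (x + y - y) (v x + 1)" using assms(2) vge_diff by blast
    then show False using assms(1) by (simp add: vge_def)
  qed
  with 1 show "v (x + y) = v x" by simp
qed

lemma vge_int: "a \<noteq> 0 \<Longrightarrow> vge (of_int a) (int k) \<longleftrightarrow> (int p)^k dvd a"
  using v_int[of a] power_dvd_iff_le_multiplicity[of a "int p" k] not_unit_p by (simp add: vge_def)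

lemma vge_int': "vge (of_int a) (int k) \<longleftrightarrow> (int p)^k dvd a"
  using vge_int by (cases "a = 0") auto

end


context pp begin

lemma p1: "real p > 1" using p2 by simp

lemma abs_lt: "padic_abs p q < real p powr (- real_of_int k) \<longleftrightarrow> vge q (k+1)"
proof (cases "q = 0")
  case True then show ?thesis using p1 by (simp add: padic_abs_def)
next
  case False
  have "padic_abs p q < real p powr (- real_of_int k) \<longleftrightarrow> - real_of_int (v q) < - real_of_int k"
    using False p1 by (simp add: padic_abs_def)
  also have "\<dots> \<longleftrightarrow> v q \<ge> k + 1" by linarith
  finally show ?thesis using False by (simp add: vge_def)
qed

lemma exists_k: assumes "e > 0" shows "\<exists>k::int. real p powr (- real_of_int k) < e"
proof -
  obtain n where n: "1 / e < real p ^ n" using real_arch_pow[OF p1] by blast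
  have "real p powr (- real_of_int (int n)) = 1 / real p ^ n"
    using p1 by (simp add: powr_minus powr_realpow divide_inverse)
  also have "\<dots> < e" using n assms p1 by (simp add: field_simps)
  finally show ?thesis by blast
qed

definition nul :: "(nat \<Rightarrow> rat) \<Rightarrow> bool" where
  "nul X \<longleftrightarrow> (\<forall>k. \<exists>N. \<forall>n\<ge>N. vge (X n) k)"
definition cau :: "(nat \<Rightarrow> rat) \<Rightarrow> bool" where
  "cau X \<longleftrightarrow> (\<forall>k. \<exists>N. \<forall>m\<ge>N. \<forall>n\<ge>N. vge (X m - X n) k)"

lemma null_iff: "padic_null p X \<longleftrightarrow> nul X"
proof
  assume h: "padic_null p X"
  show "nul X" unfolding nul_def
  proof
    fix k :: int
    have "real p powr (- real_of_int (k - 1)) > 0" using p1 by simp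
    then obtain N where "\<forall>n\<ge>N. padic_abs p (X n) < real p powr (- real_of_int (k - 1))"
      using h unfolding padic_null_def by blast
    then show "\<exists>N. \<forall>n\<ge>N. vge (X n) k" using abs_lt[of _ "k - 1"] by auto
  qed
next
  assume h: "nul X"
  show "padic_null p X" unfolding padic_null_def
  proof (intro allI impI)
    fix e :: real assume "e > 0"
    then obtain k where k: "real p powr (- real_of_int k) < e" using exists_k by blast
    obtain N where "\<forall>n\<ge>N. vge (X n) (k+1)" using h unfolding nul_def by blast
    then show "\<exists>N. \<forall>n\<ge>N. padic_abs p (X n) < e" using abs_lt[of _ k] k by (meson less_trans)
  qed
qed

lemma cauchy_iff: "padic_cauchy p X \<longleftrightarrow> cau X"
proof
  assume h: "padic_cauchy p X"
  show "cau X" unfolding cau_def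
  proof
    fix k :: int
    have "real p powr (- real_of_int (k - 1)) > 0" using p1 by simp
    then obtain N where "\<forall>m\<ge>N. \<forall>n\<ge>N. padic_abs p (X m - X n) < real p powr (- real_of_int (k - 1))"
      using h unfolding padic_cauchy_def by blast
    then show "\<exists>N. \<forall>m\<ge>N. \<forall>n\<ge>N. vge (X m - X n) k" using abs_lt[of _ "k - 1"] by auto
  qed
next
  assume h: "cau X"
  show "padic_cauchy p X" unfolding padic_cauchy_def
  proof (intro allI impI)
    fix e :: real assume "e > 0"
    then obtain k where k: "real p powr (- real_of_int k) < e" using exists_k by blast
    obtain N where "\<forall>m\<ge>N. \<forall>n\<ge>N. vge (X m - X n) (k+1)" using h unfolding cau_def by blast
    then show "\<exists>N. \<forall>m\<ge>N. \<forall>n\<ge>N. padic_abs p (X m - X n) < e" using abs_lt[of _ k] k by (meson less_trans)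
  qed
qed

lemma Qp_units_iff: "X \<in> Qp_units p \<longleftrightarrow> cau X \<and> \<not> nul X"
  by (simp add: Qp_units_def null_iff cauchy_iff)

lemma Qp_eq_iff: "Qp_eq p X Y \<longleftrightarrow> nul (\<lambda>n. X n - Y n)"
  by (simp add: Qp_eq_def null_iff)

lemma nul_add: "nul X \<Longrightarrow> nul Y \<Longrightarrow> nul (\<lambda>n. X n + Y n)"
  unfolding nul_def
proof (intro allI)
  fix k assume a: "\<forall>k. \<exists>N. \<forall>n\<ge>N. vge (X n) k" "\<forall>k. \<exists>N. \<forall>n\<ge>N. vge (Y n) k"
  obtain N1 where 1: "\<forall>n\<ge>N1. vge (X n) k" using a by blast
  obtain N2 where 2: "\<forall>n\<ge>N2. vge (Y n) k" using a by blast
  show "\<exists>N. \<forall>n\<ge>N. vge (X n + Y n) k" using 1 2 vge_add by (intro exI[of _ "max N1 N2"]) auto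
qed

lemma nul_uminus: "nul X \<Longrightarrow> nul (\<lambda>n. - X n)" by (simp add: nul_def)

lemma nul_diff: "nul X \<Longrightarrow> nul Y \<Longrightarrow> nul (\<lambda>n. X n - Y n)"
  using nul_add[of X "\<lambda>n. - Y n"] nul_uminus[of Y] by simp

lemma nul_0: "nul (\<lambda>n. 0)" by (simp add: nul_def)

lemma nul_cong: "nul X \<Longrightarrow> (\<forall>n\<ge>M. X n = Y n) \<Longrightarrow> nul Y"
  unfolding nul_def
proof (intro allI)
  fix k assume a: "\<forall>k. \<exists>N. \<forall>n\<ge>N. vge (X n) k" "\<forall>n\<ge>M. X n = Y n"
  obtain N1 where 1: "\<forall>n\<ge>N1. vge (X n) k" using a by blast
  show "\<exists>N. \<forall>n\<ge>N. vge (Y n) k" using 1 a by (intro exI[of _ "max N1 M"]) auto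
qed

definition bdd :: "(nat \<Rightarrow> rat) \<Rightarrow> bool" where
  "bdd X \<longleftrightarrow> (\<exists>j N. \<forall>n\<ge>N. vge (X n) j)"

lemma nul_mult: "nul X \<Longrightarrow> bdd Y \<Longrightarrow> nul (\<lambda>n. X n * Y n)"
  unfolding nul_def
proof (intro allI)
  fix k assume a: "\<forall>k. \<exists>N. \<forall>n\<ge>N. vge (X n) k" "bdd Y"
  obtain j N2 where 2: "\<forall>n\<ge>N2. vge (Y n) j" using a unfolding bdd_def by blast
  obtain N1 where 1: "\<forall>n\<ge>N1. vge (X n) (k - j)" using a by blast
  show "\<exists>N. \<forall>n\<ge>N. vge (X n * Y n) k" using 1 2 vge_mult[of _ "k - j" _ j]
    by (intro exI[of _ "max N1 N2"]) auto
qed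

lemma bdd_const: "bdd (\<lambda>n. c)"
  unfolding bdd_def by (cases "c = 0") (auto simp: vge_def intro!: exI[of _ "v c"])

lemma cau_bdd: assumes "cau X" shows "bdd X"
proof -
  obtain N where N: "\<forall>m\<ge>N. \<forall>n\<ge>N. vge (X m - X n) 0" using assms unfolding cau_def by blast
  obtain j where j: "vge (X N) j" using bdd_const[of "X N"] unfolding bdd_def vge_def by (cases "X N = 0") auto
  have "vge (X n) (min j 0)" if "n \<ge> N" for n
  proof -
    have "vge (X N + (X n - X N)) (min j 0)" using N that j vge_add vge_mono by (meson min.cobounded1 min.cobounded2 order_refl)
    then show ?thesis by simp
  qed
  then show ?thesis unfolding bdd_def by blast
qed

lemma bdd_mult: "bdd X \<Longrightarrow> bdd Y \<Longrightarrow> bdd (\<lambda>n. X n * Y n)"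
  unfolding bdd_def
proof -
  assume "\<exists>j N. \<forall>n\<ge>N. vge (X n) j" "\<exists>j N. \<forall>n\<ge>N. vge (Y n) j"
  then obtain j1 N1 j2 N2 where "\<forall>n\<ge>N1. vge (X n) j1" "\<forall>n\<ge>N2. vge (Y n) j2" by blast
  then show "\<exists>j N. \<forall>n\<ge>N. vge (X n * Y n) j" using vge_mult
    by (intro exI[of _ "j1+j2"] exI[of _ "max N1 N2"]) auto
qed

lemma nul_cau: assumes "nul X" shows "cau X"
  unfolding cau_def
proof
  fix k obtain N where "\<forall>n\<ge>N. vge (X n) k" using assms unfolding nul_def by blast
  then show "\<exists>N. \<forall>m\<ge>N. \<forall>n\<ge>N. vge (X m - X n) k" using vge_diff by blast
qed

lemma cau_add: "cau X \<Longrightarrow> cau Y \<Longrightarrow> cau (\<lambda>n. X n + Y n)"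
  unfolding cau_def
proof (intro allI)
  fix k assume a: "\<forall>k. \<exists>N. \<forall>m\<ge>N. \<forall>n\<ge>N. vge (X m - X n) k" "\<forall>k. \<exists>N. \<forall>m\<ge>N. \<forall>n\<ge>N. vge (Y m - Y n) k"
  obtain N1 where 1: "\<forall>m\<ge>N1. \<forall>n\<ge>N1. vge (X m - X n) k" using a by blast
  obtain N2 where 2: "\<forall>m\<ge>N2. \<forall>n\<ge>N2. vge (Y m - Y n) k" using a by blast
  have "vge (X m + Y m - (X n + Y n)) k" if "m \<ge> max N1 N2" "n \<ge> max N1 N2" for m n
    using vge_add[of "X m - X n" k "Y m - Y n"] 1 2 that by (simp add: algebra_simps)
  then show "\<exists>N. \<forall>m\<ge>N. \<forall>n\<ge>N. vge (X m + Y m - (X n + Y n)) k" by blast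
qed

lemma cau_const: "cau (\<lambda>n. c)" unfolding cau_def by simp

lemma cau_uminus: "cau X \<Longrightarrow> cau (\<lambda>n. - X n)"
  unfolding cau_def by (metis minus_diff_eq minus_diff_minus vge_uminus)

lemma cau_diff: "cau X \<Longrightarrow> cau Y \<Longrightarrow> cau (\<lambda>n. X n - Y n)"
  using cau_add[of X "\<lambda>n. - Y n"] cau_uminus[of Y] by simp

lemma cau_mult: assumes "cau X" "cau Y" shows "cau (\<lambda>n. X n * Y n)"
  unfolding cau_def
proof
  fix k
  obtain j1 N1 where b1: "\<forall>n\<ge>N1. vge (X n) j1" using cau_bdd[OF assms(1)] unfolding bdd_def by blast
  obtain j2 N2 where b2: "\<forall>n\<ge>N2. vge (Y n) j2" using cau_bdd[OF assms(2)] unfolding bdd_def by blast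
  obtain M1 where c1: "\<forall>m\<ge>M1. \<forall>n\<ge>M1. vge (X m - X n) (k - j2)" using assms(1) unfolding cau_def by blast
  obtain M2 where c2: "\<forall>m\<ge>M2. \<forall>n\<ge>M2. vge (Y m - Y n) (k - j1)" using assms(2) unfolding cau_def by blast
  define N where "N = max (max N1 N2) (max M1 M2)"
  have "vge (X m * Y m - X n * Y n) k" if "m \<ge> N" "n \<ge> N" for m n
  proof -
    have "vge (X m * (Y m - Y n)) (j1 + (k - j1))" using vge_mult b1 c2 that unfolding N_def by (meson max.boundedE)
    moreover have "vge ((X m - X n) * Y n) ((k - j2) + j2)" using vge_mult b2 c1 that unfolding N_def by (meson max.boundedE)
    ultimately have "vge (X m * (Y m - Y n) + (X m - X n) * Y n) k" using vge_add by simp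
    then show ?thesis by (simp add: algebra_simps)
  qed
  then show "\<exists>N. \<forall>m\<ge>N. \<forall>n\<ge>N. vge (X m * Y m - X n * Y n) k" by blast
qed

lemma unit_val: assumes "cau X" "\<not> nul X"
  shows "\<exists>k N. \<forall>n\<ge>N. X n \<noteq> 0 \<and> v (X n) = k"
proof -
  obtain K where K: "\<forall>N. \<exists>n\<ge>N. \<not> vge (X n) K" using assms(2) unfolding nul_def by blast
  obtain N where N: "\<forall>m\<ge>N. \<forall>n\<ge>N. vge (X m - X n) K" using assms(1) unfolding cau_def by blast
  obtain n0 where n0: "n0 \<ge> N" "\<not> vge (X n0) K" using K by blast
  have nz: "X n0 \<noteq> 0" "v (X n0) < K" using n0 by (auto simp: vge_def)
  have "X n \<noteq> 0 \<and> v (X n) = v (X n0)" if "n \<ge> N" for n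
  proof -
    have "vge (X n - X n0) K" using N that n0 by blast
    then have "vge (X n - X n0) (v (X n0) + 1)" using vge_mono nz by force
    then have "X n0 + (X n - X n0) \<noteq> 0 \<and> v (X n0 + (X n - X n0)) = v (X n0)" using v_add_lt nz by blast
    then show ?thesis by simp
  qed
  then show ?thesis by blast
qed

end


context pp begin

abbreviation P where "P \<equiv> int p"

lemma P2: "P > 2" using p2 by simp

lemma L_range: "Legendre x P \<in> {-1, 0, 1}" by (simp add: Legendre_def)

lemma small_cong: assumes "a \<in> {-1,0,1::int}" "b \<in> {-1,0,1}" "[a = b] (mod P)" shows "a = b"
proof (rule ccontr)
  assume "a \<noteq> b"
  then have "a - b \<noteq> 0" by simp
  moreover have "P dvd (a - b)" using assms(3) by (simp add: cong_iff_dvd_diff)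
  ultimately have "\<bar>P\<bar> \<le> \<bar>a - b\<bar>" using dvd_imp_le_int by blast
  moreover have "\<bar>a - b\<bar> \<le> 2" using assms(1,2) by auto
  ultimately show False using P2 by simp
qed

lemma euler: "[Legendre x P = x ^ ((p - 1) div 2)] (mod P)"
  using euler_criterion[OF pr p2] by simp

lemma L_mult: "Legendre (x * y) P = Legendre x P * Legendre y P"
proof -
  have "[Legendre x P * Legendre y P = x ^ ((p - 1) div 2) * y ^ ((p - 1) div 2)] (mod P)"
    using cong_mult[OF euler euler] .
  then have "[Legendre x P * Legendre y P = (x * y) ^ ((p - 1) div 2)] (mod P)"
    by (simp add: power_mult_distrib)
  then have "[Legendre (x*y) P = Legendre x P * Legendre y P] (mod P)"
    using euler[of "x*y"] by (meson cong_sym cong_trans)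
  moreover have "Legendre x P * Legendre y P \<in> {-1,0,1}" using L_range[of x] L_range[of y] by auto
  ultimately show ?thesis using small_cong L_range by blast
qed

lemma L_cong: assumes "[x = y] (mod P)" shows "Legendre x P = Legendre y P"
proof -
  have "[x ^ ((p - 1) div 2) = y ^ ((p - 1) div 2)] (mod P)" using cong_pow[OF assms] .
  then have "[Legendre x P = Legendre y P] (mod P)" using euler[of x] euler[of y] by (meson cong_sym cong_trans)
  then show ?thesis using small_cong L_range by blast
qed

lemma L_unit: "\<not> P dvd x \<Longrightarrow> Legendre x P = 1 \<or> Legendre x P = -1"
  by (auto simp: Legendre_def cong_0_iff)

lemma L_sq: "\<not> P dvd x \<Longrightarrow> Legendre (x^2) P = 1"
proof -
  assume a: "\<not> P dvd x"
  have "\<not> P dvd x^2" using a prime_int prime_dvd_power_int by blast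
  moreover have "QuadRes P (x^2)" unfolding QuadRes_def using cong_refl by blast
  ultimately show ?thesis by (simp add: Legendre_def cong_0_iff)
qed

lemma L_sq1: "\<not> P dvd x \<Longrightarrow> Legendre x P * Legendre x P = 1"
  using L_unit by fastforce

lemma L_QR: "Legendre x P = 1 \<Longrightarrow> \<exists>y. [y^2 = x] (mod P)"
  by (auto simp: Legendre_def QuadRes_def split: if_splits)

lemma L_nz: "Legendre x P \<noteq> 0 \<Longrightarrow> \<not> P dvd x"
  by (auto simp: Legendre_def cong_0_iff)

end


context pp begin

definition pw :: "int \<Rightarrow> rat" where "pw k = (of_nat p :: rat) powi k"

lemma p_nz: "(of_nat p :: rat) \<noteq> 0" using p2 by simp

lemma pw_nz: "pw k \<noteq> 0" unfolding pw_def using p_nz by (simp add: power_int_not_zero)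

lemma pw_add: "pw (a + b) = pw a * pw b" unfolding pw_def using p_nz by (simp add: power_int_add)

lemma v_pw: "v (pw k) = k"
proof (cases "k \<ge> 0")
  case True
  then have "pw k = (of_nat p) ^ nat k" unfolding pw_def by (simp add: power_int_nonneg_exp)
  then show ?thesis using v_power[of "of_nat p" "nat k"] p_nz v_p True by simp
next
  case False
  then have "pw k = inverse ((of_nat p) ^ nat (-k))" unfolding pw_def
    using power_int_minus[of "of_nat p :: rat" "-k"] power_int_nonneg_exp[of "-k" "of_nat p :: rat"] by simp
  then show ?thesis using v_power[of "of_nat p" "nat (-k)"] p_nz v_p False v_inverse by simp
qed

definition u :: "rat \<Rightarrow> rat" where "u q = q / pw (v q)"

lemma u_nz: "q \<noteq> 0 \<Longrightarrow> u q \<noteq> 0" unfolding u_def using pw_nz by simp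
lemma v_u: "q \<noteq> 0 \<Longrightarrow> v (u q) = 0" unfolding u_def using pw_nz v_divide v_pw by simp
lemma u_decomp: "q = u q * pw (v q)" unfolding u_def using pw_nz by simp
lemma u_mult: "x \<noteq> 0 \<Longrightarrow> y \<noteq> 0 \<Longrightarrow> u (x * y) = u x * u y"
  unfolding u_def using pw_nz by (simp add: v_mult pw_add)

lemma mz: "b \<noteq> 0 \<Longrightarrow> multiplicity P b = 0 \<longleftrightarrow> \<not> P dvd b"
  using multiplicity_eq_zero_iff[of b P] not_unit_p by blast

lemma mg: "b \<noteq> 0 \<Longrightarrow> multiplicity P b > 0 \<longleftrightarrow> P dvd b"
  using mz[of b] by linarith

lemma v_int_unit: "\<not> P dvd b \<Longrightarrow> v (of_int b) = 0"
  using v_int[of b] mz[of b] by (cases "b = 0") auto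

lemma vge_div_unit: "\<not> P dvd b \<Longrightarrow> vge (x / of_int b) k \<longleftrightarrow> vge x k"
proof -
  assume b: "\<not> P dvd b"
  then have "b \<noteq> 0" by auto
  then show ?thesis using v_int_unit[OF b] v_divide[of x "of_int b"] by (cases "x = 0") (auto simp: vge_def)
qed

lemma quot_nz: "quotient_of q = (n, e) \<Longrightarrow> q \<noteq> 0 \<Longrightarrow> n \<noteq> 0"
  using quotient_of_div by fastforce

lemma v_quot: assumes "quotient_of q = (n, e)" "q \<noteq> 0"
  shows "v q = int (multiplicity P n) - int (multiplicity P e)" "\<not> (P dvd n \<and> P dvd e)"
proof -
  have e: "e > 0" using quotient_of_denom_pos[OF assms(1)] .
  show "v q = int (multiplicity P n) - int (multiplicity P e)"
    using v_frac[of n e] quotient_of_div[OF assms(1)] quot_nz[OF assms] e by simp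
  show "\<not> (P dvd n \<and> P dvd e)" using quotient_of_coprime[OF assms(1)] prime_int
    by (meson coprime_common_divisor not_prime_unit)
qed

lemma unit_frac: assumes "q \<noteq> 0" "v q = 0"
  shows "q = of_int (fst (quotient_of q)) / of_int (snd (quotient_of q)) \<and> \<not> P dvd fst (quotient_of q) \<and> \<not> P dvd snd (quotient_of q)"
proof -
  obtain n e where q: "quotient_of q = (n, e)" by (cases "quotient_of q")
  have nz: "n \<noteq> 0" using quot_nz[OF q assms(1)] .
  have e: "e > 0" using quotient_of_denom_pos[OF q] .
  note vq = v_quot[OF q assms(1)]
  have "multiplicity P n = multiplicity P e" using vq assms(2) by simp
  then have "\<not> P dvd n \<and> \<not> P dvd e" using vq(2) mg[of n] mg[of e] nz e by auto
  then show ?thesis using quotient_of_div[OF q] q by simp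
qed

lemma int_frac_nonneg: assumes "q \<noteq> 0" "v q \<ge> 0"
  shows "q = of_int (fst (quotient_of q)) / of_int (snd (quotient_of q)) \<and> \<not> P dvd snd (quotient_of q)"
proof -
  obtain n e where q: "quotient_of q = (n, e)" by (cases "quotient_of q")
  note vq = v_quot[OF q assms(1)]
  have "\<not> P dvd e"
  proof
    assume "P dvd e"
    then have "\<not> P dvd n" using vq(2) by blast
    then have "multiplicity P n = 0" using mz quot_nz[OF q assms(1)] by blast
    moreover have "multiplicity P e > 0" using \<open>P dvd e\<close> mg quotient_of_denom_pos[OF q] by simp
    ultimately show False using vq(1) assms(2) by simp
  qed
  then show ?thesis using quotient_of_div[OF q] q by simp
qed

definition chi :: "rat \<Rightarrow> int" where
  "chi q = Legendre (fst (quotient_of q) * snd (quotient_of q)) P"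

lemma frac_cong: assumes "\<not> P dvd b" "\<not> P dvd b'"
  shows "vge (of_int a / of_int b - of_int a' / of_int b') 1 \<longleftrightarrow> [a * b' = a' * b] (mod P)"
proof -
  have b: "b \<noteq> 0" "b' \<noteq> 0" using assms by auto
  have e1: "of_int a / of_int b - of_int a' / of_int b' = (of_int (a * b' - a' * b) :: rat) / of_int (b * b')"
    using b by (simp add: field_simps)
  have nd: "\<not> P dvd b * b'" using assms prime_int by (simp add: prime_dvd_mult_iff)
  have e2: "vge ((of_int (a * b' - a' * b) :: rat) / of_int (b * b')) 1 \<longleftrightarrow> vge (of_int (a * b' - a' * b)) (int 1)"
    using vge_div_unit[OF nd, of "of_int (a * b' - a' * b)" 1] by simp
  have "vge (of_int a / of_int b - of_int a' / of_int b') 1 \<longleftrightarrow> vge (of_int (a * b' - a' * b)) (int 1)"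
    unfolding e1 using e2 .
  also have "\<dots> \<longleftrightarrow> P dvd (a * b' - a' * b)" using vge_int'[of "a * b' - a' * b" 1] by (simp only: power_one_right)
  finally show ?thesis by (simp add: cong_iff_dvd_diff)
qed

lemma chi_frac: assumes "\<not> P dvd a" "\<not> P dvd b"
  shows "chi (of_int a / of_int b) = Legendre (a * b) P"
proof -
  let ?q = "of_int a / of_int b :: rat"
  have b: "b \<noteq> 0" "a \<noteq> 0" using assms by auto
  have vq: "v ?q = 0" using v_divide[of "of_int a" "of_int b"] v_int_unit assms b by simp
  obtain n e where q: "quotient_of ?q = (n, e)" by (cases "quotient_of ?q")
  have nz: "?q \<noteq> 0" using b by simp
  have ne: "?q = of_int n / of_int e" "\<not> P dvd n" "\<not> P dvd e" using unit_frac[OF nz vq] q by auto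
  have "vge (?q - of_int n / of_int e) 1" using ne by simp
  then have c: "[a * e = n * b] (mod P)" using frac_cong[of b e a n] assms ne by simp
  have "[a * b * (e * e) = n * e * (b * b)] (mod P)"
    using cong_mult[OF c cong_refl[of "b * e"]] by (simp add: algebra_simps)
  then have "Legendre (a * b * (e * e)) P = Legendre (n * e * (b * b)) P" using L_cong by blast
  then have "Legendre (a * b) P * (Legendre e P * Legendre e P) = Legendre (n * e) P * (Legendre b P * Legendre b P)"
    by (simp add: L_mult)
  then have "Legendre (a * b) P = Legendre (n * e) P" using L_sq1 ne assms by simp
  then show ?thesis unfolding chi_def q by simp
qed

lemma chi_cong: assumes "x \<noteq> 0" "v x = 0" "y \<noteq> 0" "v y = 0" "vge (x - y) 1"
  shows "chi x = chi y"
proof -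
  obtain a b where x: "x = of_int a / of_int b" "\<not> P dvd a" "\<not> P dvd b" using unit_frac[OF assms(1,2)] by blast
  obtain a' b' where y: "y = of_int a' / of_int b'" "\<not> P dvd a'" "\<not> P dvd b'" using unit_frac[OF assms(3,4)] by blast
  have c: "[a * b' = a' * b] (mod P)" using frac_cong[of b b' a a'] x y assms(5) by simp
  have "[a * b * (b' * b') = a' * b' * (b * b)] (mod P)"
    using cong_mult[OF c cong_refl[of "b * b'"]] by (simp add: algebra_simps)
  then have "Legendre (a * b * (b' * b')) P = Legendre (a' * b' * (b * b)) P" using L_cong by blast
  then have "Legendre (a * b) P * (Legendre b' P * Legendre b' P) = Legendre (a' * b') P * (Legendre b P * Legendre b P)"
    by (simp add: L_mult)
  then have "Legendre (a * b) P = Legendre (a' * b') P" using L_sq1 x y by simp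
  then show ?thesis using chi_frac x y by simp
qed

lemma chi_mult: assumes "x \<noteq> 0" "v x = 0" "y \<noteq> 0" "v y = 0"
  shows "chi (x * y) = chi x * chi y"
proof -
  obtain a b where x: "x = of_int a / of_int b" "\<not> P dvd a" "\<not> P dvd b" using unit_frac[OF assms(1,2)] by blast
  obtain a' b' where y: "y = of_int a' / of_int b'" "\<not> P dvd a'" "\<not> P dvd b'" using unit_frac[OF assms(3,4)] by blast
  have e: "x * y = of_int (a * a') / of_int (b * b')" using x y by simp
  have "\<not> P dvd a * a'" "\<not> P dvd b * b'" using x y prime_int by (auto simp: prime_dvd_mult_iff)
  then have "chi (of_int (a * a') / of_int (b * b')) = Legendre (a * a' * (b * b')) P" by (rule chi_frac)
  then have "chi (x * y) = Legendre (a * a' * (b * b')) P" unfolding e .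
  also have "\<dots> = Legendre (a * b) P * Legendre (a' * b') P" by (simp add: L_mult algebra_simps)
  finally show ?thesis using chi_frac x y by simp
qed

lemma chi_int: "\<not> P dvd c \<Longrightarrow> chi (of_int c) = Legendre c P"
  using chi_frac[of c 1] P2 by simp

lemma chi_pm: assumes "x \<noteq> 0" "v x = 0" shows "chi x = 1 \<or> chi x = -1"
proof -
  obtain a b where x: "x = of_int a / of_int b" "\<not> P dvd a" "\<not> P dvd b" using unit_frac[OF assms(1,2)] by blast
  have "\<not> P dvd a * b" using x prime_int by (auto simp: prime_dvd_mult_iff)
  then show ?thesis using chi_frac x L_unit by simp
qed

lemma chi_sq: assumes "x \<noteq> 0" "v x = 0" shows "chi (x * x) = 1"
  using chi_mult[OF assms assms] chi_pm[OF assms] by auto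

lemma chi_sqrt: assumes "x \<noteq> 0" "v x = 0" "chi x = 1"
  shows "\<exists>r. \<not> P dvd r \<and> vge (x - of_int r ^ 2) 1"
proof -
  obtain a b where x: "x = of_int a / of_int b" "\<not> P dvd a" "\<not> P dvd b" using unit_frac[OF assms(1,2)] by blast
  have "Legendre (a * b) P = 1" using chi_frac x assms(3) by simp
  then obtain t where t: "[t^2 = a * b] (mod P)" using L_QR by blast
  have "coprime b P" using x prime_int prime_imp_coprime[of P b] coprime_commute by blast
  then obtain bi where bi: "[b * bi = 1] (mod P)" using cong_solve_coprime_int by blast
  define r where "r = t * bi"
  have "[r^2 * b = t^2 * (bi * bi * b)] (mod P)" unfolding r_def by (simp add: power2_eq_square algebra_simps)
  moreover have "[t^2 * (bi * bi * b) = a * b * (bi * bi * b)] (mod P)" using cong_mult[OF t cong_refl] .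
  moreover have "a * b * (bi * bi * b) = a * ((b * bi) * (b * bi))" by (simp add: algebra_simps)
  moreover have "[a * ((b * bi) * (b * bi)) = a * (1 * 1)] (mod P)" using cong_mult[OF cong_refl cong_mult[OF bi bi]] .
  ultimately have c: "[r^2 * b = a] (mod P)" by (metis cong_trans mult_1_right)
  have rnd: "\<not> P dvd r"
  proof
    assume "P dvd r" then have "P dvd r^2 * b" by (simp add: power2_eq_square)
    then have "P dvd a" using c by (meson cong_dvd_iff)
    then show False using x by simp
  qed
  have "vge (of_int a / of_int b - of_int (r^2) / of_int 1) 1"
    using frac_cong[of b 1 a "r^2"] x c P2 by (simp add: cong_sym_eq)
  then show ?thesis using rnd x by auto
qed

end


context pp begin

lemma hensel_int: assumes r: "\<not> P dvd r" and rc: "P dvd (r^2 - c)" and n: "n \<ge> 1"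
  shows "\<exists>z. P dvd (z - r) \<and> P^n dvd (z^2 - c)"
  using n
proof (induction n rule: dec_induct)
  case base then show ?case using rc by (intro exI[of _ r]) simp
next
  case (step n)
  then obtain z where z: "P dvd (z - r)" "P^n dvd (z^2 - c)" by blast
  obtain t where t: "z^2 - c = P^n * t" using z(2) by (auto elim: dvdE)
  have zr: "\<not> P dvd z"
  proof
    assume "P dvd z" then have "P dvd z - (z - r)" using z(1) by (rule dvd_diff)
    then show False using r by simp
  qed
  have "\<not> P dvd 2" using P2 by (auto dest: zdvd_imp_le)
  then have "\<not> P dvd 2 * z" using zr prime_int by (simp add: prime_dvd_mult_iff)
  then have "coprime (2 * z) P" using prime_int prime_imp_coprime[of P "2*z"] coprime_commute by blast
  then obtain w where w: "[2 * z * w = 1] (mod P)" using cong_solve_coprime_int by blast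
  define s where "s = - t * w"
  define z' where "z' = z + s * P^n"
  have e1: "z'^2 - c = (z^2 - c) + P^n * (2*z*s) + s^2 * (P^n)^2" unfolding z'_def by (simp add: power2_eq_square algebra_simps)
  have e2: "t + 2*z*s = t * (1 - 2 * z * w)" unfolding s_def by (simp add: algebra_simps)
  have "z'^2 - c = P^n * (t * (1 - 2 * z * w)) + s^2 * P^(2*n)"
    unfolding e1 t e2[symmetric] by (simp add: power_mult[symmetric] algebra_simps)
  moreover have "P dvd (1 - 2 * z * w)" using w by (metis cong_iff_dvd_diff cong_sym_eq)
  then have "P^(Suc n) dvd P^n * (t * (1 - 2 * z * w))" by (simp add: mult_dvd_mono)
  moreover have "P^(Suc n) dvd s^2 * P^(2*n)"
  proof -
    have "P^(Suc n) dvd P^(2*n)" using step(1) le_imp_power_dvd[of "Suc n" "2*n" P] by simp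
    then show ?thesis by (rule dvd_mult)
  qed
  ultimately have "P^(Suc n) dvd z'^2 - c" by simp
  moreover have "P dvd z' - r"
  proof -
    have "P dvd P^n" using step(1) by (simp add: dvd_power)
    then have "P dvd (z - r) + s * P^n" using z(1) by simp
    moreover have "z' - r = (z - r) + s * P^n" unfolding z'_def by simp
    ultimately show ?thesis by metis
  qed
  ultimately show ?case by blast
qed

lemma approx: assumes "q \<noteq> 0" "v q \<ge> 0" shows "\<exists>c::int. vge (q - of_int c) (int n)"
proof -
  define a where "a = fst (quotient_of q)"
  define b where "b = snd (quotient_of q)"
  have q: "q = of_int a / of_int b" "\<not> P dvd b" using int_frac_nonneg[OF assms] unfolding a_def b_def by auto
  have "coprime b P" using q prime_int prime_imp_coprime[of P b] coprime_commute by blast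
  then have "coprime b (P^n)" by simp
  then obtain bi where bi: "[b * bi = 1] (mod P^n)" using cong_solve_coprime_int by blast
  have b0: "b \<noteq> 0" using q by auto
  have e: "q - of_int (a * bi) = of_int (a * (1 - b * bi)) / of_int b" using q b0 by (simp add: field_simps)
  have "P^n dvd (1 - b * bi)" using bi by (metis cong_iff_dvd_diff cong_sym_eq)
  then have "P^n dvd a * (1 - b * bi)" by simp
  then have "vge (of_int (a * (1 - b * bi))) (int n)" using vge_int' by blast
  then have "vge (of_int (a * (1 - b * bi)) / of_int b) (int n)" using vge_div_unit[OF q(2)] by blast
  then show ?thesis unfolding e[symmetric] by blast
qed

lemma sqrt_approx: assumes "q \<noteq> 0" "v q = 0" "\<not> P dvd r" "vge (q - of_int r ^ 2) 1"
  shows "\<exists>z. P dvd (z - r) \<and> vge (q - of_int z ^ 2) (int n)"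
proof -
  define n' where "n' = max n 1"
  obtain c where c: "vge (q - of_int c) (int n')" using approx assms by fastforce
  have "vge (q - of_int c) 1" using c vge_mono[of _ "int n'" 1] unfolding n'_def by force
  then have "vge ((q - of_int r ^ 2) - (q - of_int c)) 1" using vge_diff[OF assms(4)] by blast
  then have "vge (of_int (c - r^2)) (int 1)" by simp
  then have "P^1 dvd (c - r^2)" using vge_int' by blast
  then have "P dvd (c - r^2)" by simp
  then have "P dvd (r^2 - c)" by (metis dvd_minus_iff minus_diff_eq)
  moreover have "n' \<ge> 1" unfolding n'_def by simp
  ultimately obtain z where z: "P dvd (z - r)" "P^n' dvd (z^2 - c)" using hensel_int[OF assms(3)] by blast
  have "vge (of_int (z^2 - c)) (int n')" using z(2) vge_int' by blast
  then have "vge ((q - of_int c) - of_int (z^2 - c)) (int n')" using vge_diff c by blast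
  then have "vge (q - of_int z ^ 2) (int n')" by simp
  moreover have "int n \<le> int n'" unfolding n'_def by simp
  ultimately show ?thesis using z(1) vge_mono by blast
qed

end


context pp begin

lemma vge_div_pw: "vge (w / pw k) j \<longleftrightarrow> vge w (j + k)"
  using v_divide[of w "pw k"] pw_nz[of k] v_pw[of k] by (cases "w = 0") (auto simp: vge_def)

lemma vge_mult_pw: "vge (w * pw k) j \<longleftrightarrow> vge w (j - k)"
  using v_mult[of w "pw k"] pw_nz[of k] v_pw[of k] by (cases "w = 0") (auto simp: vge_def)

lemma close: assumes "y \<noteq> 0" "vge (x - y) (v y + 1)"
  shows "x \<noteq> 0" "v x = v y" "chi (u x) = chi (u y)"
proof -
  have "y + (x - y) \<noteq> 0" "v (y + (x - y)) = v y" using v_add_lt[OF assms] by auto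
  then show x: "x \<noteq> 0" "v x = v y" by auto
  have "u x - u y = (x - y) / pw (v y)" unfolding u_def using x by (simp add: diff_divide_distrib)
  moreover have "vge ((x - y) / pw (v y)) 1" using vge_div_pw assms(2) by (simp add: add.commute)
  ultimately have "vge (u x - u y) 1" by simp
  then show "chi (u x) = chi (u y)" using chi_cong u_nz v_u x assms(1) by blast
qed

definition cls :: "(nat \<Rightarrow> rat) \<Rightarrow> bool \<Rightarrow> int \<Rightarrow> bool" where
  "cls X e c \<longleftrightarrow> (\<exists>N. \<forall>n\<ge>N. X n \<noteq> 0 \<and> (even (v (X n)) \<longleftrightarrow> e) \<and> chi (u (X n)) = c)"

lemma cls_exists: assumes "cau X" "\<not> nul X" shows "\<exists>e c. cls X e c \<and> (c = 1 \<or> c = -1)"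
proof -
  obtain k N where kN: "\<forall>n\<ge>N. X n \<noteq> 0 \<and> v (X n) = k" using unit_val[OF assms] by blast
  obtain M where M: "\<forall>m\<ge>M. \<forall>n\<ge>M. vge (X m - X n) (k + 1)" using assms(1) unfolding cau_def by blast
  define n0 where "n0 = max N M"
  have "X n \<noteq> 0 \<and> (even (v (X n)) \<longleftrightarrow> even k) \<and> chi (u (X n)) = chi (u (X n0))" if "n \<ge> n0" for n
  proof -
    have "vge (X n - X n0) (v (X n0) + 1)" using M kN that unfolding n0_def by simp
    then show ?thesis using close[of "X n0" "X n"] kN that unfolding n0_def by auto
  qed
  moreover have "chi (u (X n0)) = 1 \<or> chi (u (X n0)) = -1" using chi_pm u_nz v_u kN unfolding n0_def by simp
  ultimately show ?thesis unfolding cls_def by blast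
qed

lemma cls_unique: "cls X e c \<Longrightarrow> cls X e' c' \<Longrightarrow> e = e' \<and> c = c'"
proof -
  assume "cls X e c" "cls X e' c'"
  then obtain N N' where "\<forall>n\<ge>N. X n \<noteq> 0 \<and> (even (v (X n)) \<longleftrightarrow> e) \<and> chi (u (X n)) = c"
    "\<forall>n\<ge>N'. X n \<noteq> 0 \<and> (even (v (X n)) \<longleftrightarrow> e') \<and> chi (u (X n)) = c'" unfolding cls_def by blast
  then show ?thesis by (metis max.cobounded1 max.cobounded2)
qed

lemma cls_mult: assumes "cls X e c" "cls Y e' c'" shows "cls (\<lambda>n. X n * Y n) (e = e') (c * c')"
proof -
  obtain N N' where N: "\<forall>n\<ge>N. X n \<noteq> 0 \<and> (even (v (X n)) \<longleftrightarrow> e) \<and> chi (u (X n)) = c"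
    and N': "\<forall>n\<ge>N'. Y n \<noteq> 0 \<and> (even (v (Y n)) \<longleftrightarrow> e') \<and> chi (u (Y n)) = c'"
    using assms unfolding cls_def by blast
  have "X n * Y n \<noteq> 0 \<and> (even (v (X n * Y n)) \<longleftrightarrow> (e = e')) \<and> chi (u (X n * Y n)) = c * c'"
    if "n \<ge> max N N'" for n
  proof -
    have h: "X n \<noteq> 0" "Y n \<noteq> 0" "(even (v (X n)) \<longleftrightarrow> e)" "(even (v (Y n)) \<longleftrightarrow> e')" "chi (u (X n)) = c" "chi (u (Y n)) = c'"
      using N N' that by auto
    then show ?thesis using v_mult u_mult chi_mult u_nz v_u by auto
  qed
  then show ?thesis unfolding cls_def by blast
qed

lemma chi_inverse: assumes "x \<noteq> 0" "v x = 0" shows "chi (inverse x) = chi x"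
proof -
  have "v (inverse x) = 0" "inverse x \<noteq> 0" using v_inverse assms by auto
  then have "chi (x * inverse x) = chi x * chi (inverse x)" using chi_mult assms by blast
  moreover have "chi 1 = 1" using chi_int[of 1] L_sq[of 1] P2 by simp
  ultimately have "chi x * chi (inverse x) = 1" using assms by simp
  then show ?thesis using chi_pm[OF assms] by auto
qed

lemma u_inverse: "x \<noteq> 0 \<Longrightarrow> u (inverse x) = inverse (u x)"
proof -
  assume x: "x \<noteq> 0"
  have "pw (v x) * pw (- v x) = 1" using pw_add[of "v x" "- v x"] by (simp add: pw_def)
  then have "pw (- v x) = inverse (pw (v x))" by (metis inverse_unique)
  then show ?thesis unfolding u_def using v_inverse[OF x] by (simp add: divide_inverse)
qed

lemma cls_inverse: assumes "cls X e c" shows "cls (\<lambda>n. inverse (X n)) e c"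
proof -
  obtain N where N: "\<forall>n\<ge>N. X n \<noteq> 0 \<and> (even (v (X n)) \<longleftrightarrow> e) \<and> chi (u (X n)) = c"
    using assms unfolding cls_def by blast
  have "inverse (X n) \<noteq> 0 \<and> (even (v (inverse (X n))) \<longleftrightarrow> e) \<and> chi (u (inverse (X n))) = c" if "n \<ge> N" for n
  proof -
    have h: "X n \<noteq> 0" "(even (v (X n)) \<longleftrightarrow> e)" "chi (u (X n)) = c" using N that by auto
    then show ?thesis using v_inverse u_inverse chi_inverse u_nz v_u by auto
  qed
  then show ?thesis unfolding cls_def by blast
qed

lemma cls_eq: assumes "cls X e c" "cau X" "\<not> nul X" "nul (\<lambda>n. Y n - X n)" shows "cls Y e c"
proof -
  obtain N where N: "\<forall>n\<ge>N. X n \<noteq> 0 \<and> (even (v (X n)) \<longleftrightarrow> e) \<and> chi (u (X n)) = c"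
    using assms unfolding cls_def by blast
  obtain k NX where kX: "\<forall>n\<ge>NX. X n \<noteq> 0 \<and> v (X n) = k" using unit_val[OF assms(2,3)] by blast
  obtain M where M: "\<forall>n\<ge>M. vge (Y n - X n) (k + 1)" using assms(4) unfolding nul_def by blast
  have "Y n \<noteq> 0 \<and> (even (v (Y n)) \<longleftrightarrow> e) \<and> chi (u (Y n)) = c" if "n \<ge> max N (max NX M)" for n
  proof -
    have h: "X n \<noteq> 0" "(even (v (X n)) \<longleftrightarrow> e)" "chi (u (X n)) = c" "v (X n) = k" "vge (Y n - X n) (k + 1)"
      using N kX M that by auto
    then show ?thesis using close[of "X n" "Y n"] by auto
  qed
  then show ?thesis unfolding cls_def by blast
qed

lemma cls_const: "c \<noteq> 0 \<Longrightarrow> cls (Qp_const c) (even (v c)) (chi (u c))"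
  unfolding cls_def Qp_const_def by auto

lemma unit_const: "c \<noteq> 0 \<Longrightarrow> cau (Qp_const c) \<and> \<not> nul (Qp_const c)"
  unfolding Qp_const_def nul_def using cau_const[of c] by (auto simp: vge_def intro!: exI[of _ "v c + 1"])

end


context pp begin

lemma cls_eq2: assumes "cls S e c" "cau X" "\<not> nul X" "nul (\<lambda>n. X n - S n)" shows "cls X e c"
proof -
  obtain N where N: "\<forall>n\<ge>N. S n \<noteq> 0 \<and> (even (v (S n)) \<longleftrightarrow> e) \<and> chi (u (S n)) = c"
    using assms unfolding cls_def by blast
  obtain k NX where kX: "\<forall>n\<ge>NX. X n \<noteq> 0 \<and> v (X n) = k" using unit_val[OF assms(2,3)] by blast
  obtain M where M: "\<forall>n\<ge>M. vge (S n - X n) (k + 1)" using nul_uminus[OF assms(4)] unfolding nul_def by fastforce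
  have "X n \<noteq> 0 \<and> (even (v (X n)) \<longleftrightarrow> e) \<and> chi (u (X n)) = c" if "n \<ge> max N (max NX M)" for n
  proof -
    have h: "X n \<noteq> 0" "(even (v (S n)) \<longleftrightarrow> e)" "chi (u (S n)) = c" "v (X n) = k" "vge (S n - X n) (k + 1)"
      using N kX M that by auto
    then show ?thesis using close[of "X n" "S n"] by auto
  qed
  then show ?thesis unfolding cls_def by blast
qed

lemma cls_pm: "cls X e c \<Longrightarrow> c = 1 \<or> c = -1"
proof -
  assume "cls X e c"
  then obtain N where "\<forall>n\<ge>N. X n \<noteq> 0 \<and> chi (u (X n)) = c" unfolding cls_def by blast
  then have "X N \<noteq> 0" "chi (u (X N)) = c" by auto
  then show ?thesis using chi_pm[of "u (X N)"] u_nz v_u by auto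
qed

lemma sq_equiv_cls: assumes "sq_equiv p X Y" "cls Y e c" shows "cls X e c"
proof -
  obtain Z where Z: "Z \<in> Qp_units p" "Qp_eq p X (\<lambda>n. Y n * (Z n)\<^sup>2)" "X \<in> Qp_units p" "Y \<in> Qp_units p"
    using assms(1) unfolding sq_equiv_def by blast
  have Zu: "cau Z" "\<not> nul Z" using Z Qp_units_iff by auto
  obtain e' c' where ec: "cls Z e' c'" "c' = 1 \<or> c' = -1" using cls_exists[OF Zu] by blast
  have "cls (\<lambda>n. (Y n * Z n) * Z n) ((e = e') = e') (c * c' * c')" using cls_mult[OF cls_mult[OF assms(2) ec(1)] ec(1)] .
  moreover have "c * c' * c' = c" using ec(2) by auto
  moreover have "((e = e') = e') = e" by auto
  moreover have "(\<lambda>n. (Y n * Z n) * Z n) = (\<lambda>n. Y n * (Z n)\<^sup>2)" by (simp add: power2_eq_square algebra_simps)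
  ultimately have "cls (\<lambda>n. Y n * (Z n)\<^sup>2) e c" by (simp only:)
  moreover have "cau X" "\<not> nul X" using Z(3) Qp_units_iff by auto
  moreover have "nul (\<lambda>n. X n - Y n * (Z n)\<^sup>2)" using Z(2) Qp_eq_iff by auto
  ultimately show ?thesis by (rule cls_eq2)
qed

lemma cau_inv: assumes "cau Y" "\<not> nul Y" shows "cau (\<lambda>n. inverse (Y n))"
  unfolding cau_def
proof
  fix K
  obtain k N where kN: "\<forall>n\<ge>N. Y n \<noteq> 0 \<and> v (Y n) = k" using unit_val[OF assms] by blast
  obtain M where M: "\<forall>m\<ge>M. \<forall>n\<ge>M. vge (Y m - Y n) (K + 2 * k)" using assms(1) unfolding cau_def by blast
  have "vge (inverse (Y m) - inverse (Y n)) K" if "m \<ge> max N M" "n \<ge> max N M" for m n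
  proof -
    have h: "Y m \<noteq> 0" "Y n \<noteq> 0" "v (Y m) = k" "v (Y n) = k" "vge (Y n - Y m) (K + 2 * k)" using kN M that by auto
    have e: "inverse (Y m) - inverse (Y n) = (Y n - Y m) * inverse (Y m * Y n)" using h by (simp add: field_simps)
    have "v (inverse (Y m * Y n)) = - 2 * k" using h v_inverse v_mult by simp
    then have "vge ((Y n - Y m) * inverse (Y m * Y n)) ((K + 2 * k) + (- 2 * k))"
      using vge_mult[OF h(5), of "inverse (Y m * Y n)" "- 2 * k"] h by (simp add: vge_def)
    then show ?thesis using e by simp
  qed
  then show "\<exists>N. \<forall>m\<ge>N. \<forall>n\<ge>N. vge (inverse (Y m) - inverse (Y n)) K" by blast
qed

end


context pp begin

lemma cls_sq_equiv:
  assumes X: "cau X" "\<not> nul X" and Y: "cau Y" "\<not> nul Y" and cX: "cls X e c" and cY: "cls Y e c"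
  shows "sq_equiv p X Y"
proof -
  define Q where "Q n = X n * inverse (Y n)" for n
  have cQ: "cau Q" unfolding Q_def using cau_mult[OF X(1) cau_inv[OF Y]] .
  have c1: "c * c = 1" using cls_pm[OF cX] by auto
  have clsQ: "cls Q True 1" unfolding Q_def using cls_mult[OF cX cls_inverse[OF cY]] c1 by simp
  obtain kY NY where kY: "\<forall>n\<ge>NY. Y n \<noteq> 0 \<and> v (Y n) = kY" using unit_val[OF Y] by blast
  have nQ: "\<not> nul Q"
  proof
    assume "nul Q"
    moreover have "bdd Y" using cau_bdd[OF Y(1)] .
    ultimately have "nul (\<lambda>n. Q n * Y n)" by (rule nul_mult)
    moreover have "\<forall>n\<ge>NY. Q n * Y n = X n" unfolding Q_def using kY by simp
    ultimately have "nul X" by (rule nul_cong)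
    then show False using X by simp
  qed
  obtain kq NQ where kq: "\<forall>n\<ge>NQ. Q n \<noteq> 0 \<and> v (Q n) = kq" using unit_val[OF cQ nQ] by blast
  obtain N1 where N1: "\<forall>n\<ge>N1. Q n \<noteq> 0 \<and> even (v (Q n)) \<and> chi (u (Q n)) = 1" using clsQ unfolding cls_def by auto
  have "even kq" using kq N1 by (metis max.cobounded1 max.cobounded2)
  then obtain j where j: "kq = j + j" by (metis evenE mult_2)
  obtain M where M: "\<forall>m\<ge>M. \<forall>n\<ge>M. vge (Q m - Q n) (kq + 1)" using cQ unfolding cau_def by blast
  define n0 where "n0 = max (max NY NQ) (max N1 M)"
  have q0: "Q n0 \<noteq> 0" "v (Q n0) = kq" "chi (u (Q n0)) = 1" using kq N1 unfolding n0_def by auto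
  obtain r where r: "\<not> P dvd r" "vge (u (Q n0) - of_int r ^ 2) 1"
    using chi_sqrt[of "u (Q n0)"] u_nz v_u q0 by blast
  have uQ: "u (Q n) \<noteq> 0 \<and> v (u (Q n)) = 0 \<and> vge (u (Q n) - of_int r ^ 2) 1" if "n \<ge> n0" for n
  proof -
    have h: "Q n \<noteq> 0" "v (Q n) = kq" "vge (Q n - Q n0) (kq + 1)" using kq M that unfolding n0_def by auto
    have "u (Q n) - u (Q n0) = (Q n - Q n0) / pw kq" unfolding u_def using h q0 by (simp add: diff_divide_distrib)
    moreover have "vge ((Q n - Q n0) / pw kq) 1" using vge_div_pw h(3) by (simp add: add.commute)
    ultimately have "vge (u (Q n) - u (Q n0)) 1" by simp
    then have "vge ((u (Q n) - u (Q n0)) + (u (Q n0) - of_int r ^ 2)) 1" using vge_add r(2) by blast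
    then show ?thesis using u_nz v_u h by simp
  qed
  define zz where "zz n = (SOME z. P dvd (z - r) \<and> vge (u (Q n) - of_int z ^ 2) (int n))" for n
  have zz: "P dvd (zz n - r) \<and> vge (u (Q n) - of_int (zz n) ^ 2) (int n)" if "n \<ge> n0" for n
  proof -
    have "\<exists>z. P dvd (z - r) \<and> vge (u (Q n) - of_int z ^ 2) (int n)"
      using sqrt_approx[of "u (Q n)" r n] uQ[OF that] r(1) by blast
    then show ?thesis unfolding zz_def by (rule someI_ex)
  qed
  have zzu: "\<not> P dvd zz n" if "n \<ge> n0" for n
  proof
    assume a: "P dvd zz n"
    have "P dvd zz n - r" using zz[OF that] by blast
    from dvd_diff[OF a this] have "P dvd zz n - (zz n - r)" .
    then show False using r(1) by simp
  qed
  define Z where "Z n = of_int (zz n) * pw j" for n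
  have vZ: "Z n \<noteq> 0 \<and> v (Z n) = j" if "n \<ge> n0" for n
  proof -
    have "of_int (zz n) \<noteq> (0::rat)" using zzu[OF that] by auto
    then show ?thesis unfolding Z_def using v_mult pw_nz v_pw v_int_unit[OF zzu[OF that]] by simp
  qed
  have pwkq: "pw kq = pw j * pw j" unfolding j by (rule pw_add)
  have nulXYZ: "nul (\<lambda>n. X n - Y n * (Z n)\<^sup>2)" unfolding nul_def
  proof
    fix K
    define N where "N = max n0 (nat (K - kY - kq))"
    have "vge (X n - Y n * (Z n)\<^sup>2) K" if "n \<ge> N" for n
    proof -
      have n: "n \<ge> n0" "int n \<ge> K - kY - kq" using that unfolding N_def by auto
      have h: "Y n \<noteq> 0" "v (Y n) = kY" "Q n \<noteq> 0" "v (Q n) = kq" using kY kq n unfolding n0_def by auto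
      have XQ: "X n = Q n * Y n" unfolding Q_def using h by simp
      have "X n - Y n * (Z n)\<^sup>2 = Y n * (pw kq * (u (Q n) - of_int (zz n) ^ 2))"
        unfolding XQ Z_def pwkq using u_decomp[of "Q n"] h(4) pwkq
        by (simp add: power2_eq_square algebra_simps)
      moreover have "vge (pw kq * (u (Q n) - of_int (zz n) ^ 2)) (kq + int n)"
        using vge_mult_v[of "pw kq" "u (Q n) - of_int (zz n) ^ 2" "int n"] zz[OF n(1)] pw_nz v_pw by simp
      then have "vge (Y n * (pw kq * (u (Q n) - of_int (zz n) ^ 2))) (kY + (kq + int n))"
        using vge_mult_v h by fastforce
      ultimately show ?thesis using vge_mono n(2) by fastforce
    qed
    then show "\<exists>N. \<forall>n\<ge>N. vge (X n - Y n * (Z n)\<^sup>2) K" by blast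
  qed
  have cZ: "cau Z" unfolding cau_def
  proof
    fix K
    define L where "L = K - j"
    obtain M2 where M2: "\<forall>m\<ge>M2. \<forall>n\<ge>M2. vge (Q m - Q n) (L + kq)" using cQ unfolding cau_def by blast
    define N where "N = max (max n0 M2) (nat L)"
    have "vge (Z m - Z n) K" if "m \<ge> N" "n \<ge> N" for m n
    proof -
      have mn: "m \<ge> n0" "n \<ge> n0" "int m \<ge> L" "int n \<ge> L" "vge (Q m - Q n) (L + kq)" using that M2 unfolding N_def by auto
      have hm: "Q m \<noteq> 0" "v (Q m) = kq" using kq mn unfolding n0_def by auto
      have hn: "Q n \<noteq> 0" "v (Q n) = kq" using kq mn unfolding n0_def by auto
      have "u (Q m) - u (Q n) = (Q m - Q n) / pw kq" unfolding u_def using hm hn by (simp add: diff_divide_distrib)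
      then have a2: "vge (u (Q m) - u (Q n)) L" using vge_div_pw mn(5) by simp
      have a1: "vge (of_int (zz m) ^ 2 - u (Q m)) L" using zz[OF mn(1)] vge_mono mn(3)
        by (metis minus_diff_eq vge_uminus)
      have a3: "vge (u (Q n) - of_int (zz n) ^ 2) L" using zz[OF mn(2)] vge_mono mn(4) by blast
      have "vge ((of_int (zz m) ^ 2 - u (Q m)) + (u (Q m) - u (Q n)) + (u (Q n) - of_int (zz n) ^ 2)) L"
        using vge_add a1 a2 a3 by blast
      then have sq: "vge (of_int (zz m * zz m - zz n * zz n)) L" by (simp add: power2_eq_square)
      have d1: "P dvd zz m - r" "P dvd zz n - r" using zz mn by auto
      have "P dvd (zz m - r) + (zz n - r)" using dvd_add[OF d1] .
      moreover have "(zz m - r) + (zz n - r) = (zz m + zz n) - 2 * r" by simp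
      ultimately have "P dvd (zz m + zz n) - 2 * r" by metis
      moreover have "\<not> P dvd 2 * r" using r(1) prime_int P2 by (auto simp: prime_dvd_mult_iff dest: zdvd_imp_le)
      ultimately have nd: "\<not> P dvd (zz m + zz n)"
      proof -
        assume a: "P dvd (zz m + zz n) - 2 * r" "\<not> P dvd 2 * r"
        show ?thesis
        proof
          assume "P dvd zz m + zz n"
          from dvd_diff[OF this a(1)] have "P dvd (zz m + zz n) - ((zz m + zz n) - 2 * r)" .
          then show False using a(2) by simp
        qed
      qed
      have "of_int (zz m * zz m - zz n * zz n) / of_int (zz m + zz n) = (of_int (zz m - zz n) :: rat)"
      proof -
        have "zz m + zz n \<noteq> 0" using nd by auto
        then have nz: "(of_int (zz m) + of_int (zz n) :: rat) \<noteq> 0" by (metis of_int_add of_int_eq_0_iff)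
        have "(of_int (zz m) * of_int (zz m) - of_int (zz n) * of_int (zz n) :: rat) = (of_int (zz m) - of_int (zz n)) * (of_int (zz m) + of_int (zz n))"
          by (simp add: algebra_simps)
        then show ?thesis using nz by simp
      qed
      then have "vge (of_int (zz m - zz n)) L" using vge_div_unit[OF nd] sq by metis
      then have "vge (of_int (zz m - zz n) * pw j) K" using vge_mult_pw unfolding L_def by simp
      then show ?thesis unfolding Z_def by (simp add: algebra_simps)
    qed
    then show "\<exists>N. \<forall>m\<ge>N. \<forall>n\<ge>N. vge (Z m - Z n) K" by blast
  qed
  have nZ: "\<not> nul Z"
  proof
    assume "nul Z"
    then obtain N where "\<forall>n\<ge>N. vge (Z n) (j + 1)" unfolding nul_def by blast
    then have "vge (Z (max N n0)) (j + 1)" by simp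
    then show False using vZ[of "max N n0"] by (simp add: vge_def)
  qed
  have "Z \<in> Qp_units p" using cZ nZ Qp_units_iff by simp
  moreover have "X \<in> Qp_units p" "Y \<in> Qp_units p" using X Y Qp_units_iff by auto
  moreover have "Qp_eq p X (\<lambda>n. Y n * (Z n)\<^sup>2)" using nulXYZ Qp_eq_iff by simp
  ultimately show ?thesis unfolding sq_equiv_def by blast
qed

end


context pp begin

lemma unit_pw: assumes "w \<noteq> 0" "v w = 0" shows "w * pw k \<noteq> 0" "v (w * pw k) = k" "u (w * pw k) = w"
proof -
  show 1: "w * pw k \<noteq> 0" using assms pw_nz by simp
  show 2: "v (w * pw k) = k" using v_mult[OF assms(1) pw_nz] v_pw assms by simp
  show "u (w * pw k) = w" unfolding u_def 2 using pw_nz by simp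
qed

lemma intunit: assumes "\<not> P dvd w" shows "(of_int w :: rat) \<noteq> 0" "v (of_int w) = 0" "chi (of_int w) = Legendre w P"
proof -
  show "(of_int w :: rat) \<noteq> 0" using assms by auto
  show "v (of_int w) = 0" using v_int_unit[OF assms] .
  show "chi (of_int w) = Legendre w P" using chi_int[OF assms] .
qed

lemma chiu_mult: "x \<noteq> 0 \<Longrightarrow> y \<noteq> 0 \<Longrightarrow> chi (u (x * y)) = chi (u x) * chi (u y)"
  using u_mult chi_mult u_nz v_u by simp

lemma chiu_sq: "y \<noteq> 0 \<Longrightarrow> chi (u (y * y)) = 1"
  using u_mult chi_sq u_nz v_u by simp

lemma pw1: "pw 1 = of_nat p" unfolding pw_def by simp
lemma pw2: "pw 2 = (of_nat p)^2" unfolding pw_def by simp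

lemma vge_ge: "x \<noteq> 0 \<Longrightarrow> vge x k \<Longrightarrow> v x \<ge> k" by (simp add: vge_def)

lemma L_unit_pm: "\<not> P dvd w \<Longrightarrow> Legendre w P = 1 \<or> Legendre w P = -1" using L_unit by blast

end

locale cur = pp +
  fixes A B d0 :: int
  assumes Bu: "\<not> int p dvd B" and Du: "\<not> int p dvd (A^2 - 4 * B)" and d0u: "\<not> int p dvd d0"
begin

definition a :: rat where "a = of_int (int p * d0 * A)"
definition b :: rat where "b = of_int ((int p * d0)^2 * B)"
definition F :: "rat \<Rightarrow> rat" where "F x = x ^ 3 + (- 2 * a) * x\<^sup>2 + (a\<^sup>2 - 4 * b) * x"
abbreviation D where "D \<equiv> A^2 - 4 * B"

lemma a_pw: "a = of_int (d0 * A) * pw 1" unfolding a_def pw1 by simp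
lemma b_pw: "b = of_int (d0^2 * B) * pw 2" unfolding b_def pw2 by (simp add: power_mult_distrib)
lemma disc_pw: "a\<^sup>2 - 4 * b = of_int (d0^2 * D) * pw 2"
  unfolding a_def b_def pw2 by (simp add: power_mult_distrib algebra_simps)

lemma P_not2: "\<not> P dvd 2" using P2 by (auto dest: zdvd_imp_le)
lemma P_not4: "\<not> P dvd 4"
proof
  assume "P dvd 4"
  moreover have "(4::int) = 2^2" by simp
  ultimately have "P dvd 2^2" by metis
  then have "P dvd 2" using prime_dvd_power[OF prime_int] by blast
  then show False using P_not2 by simp
qed

lemma nd_mult: "\<not> P dvd x \<Longrightarrow> \<not> P dvd y \<Longrightarrow> \<not> P dvd x * y"
  using prime_int by (simp add: prime_dvd_mult_iff)

lemma nd_pow2: "\<not> P dvd x \<Longrightarrow> \<not> P dvd x^2"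
  using nd_mult by (simp add: power2_eq_square)

lemma L_d0D: "Legendre (d0^2 * D) P = Legendre D P"
  using L_mult L_sq[OF d0u] by simp

lemma disc_unit: "a\<^sup>2 - 4 * b \<noteq> 0" "v (a\<^sup>2 - 4 * b) = 2" "chi (u (a\<^sup>2 - 4 * b)) = Legendre D P"
proof -
  have w: "\<not> P dvd d0^2 * D" using nd_mult nd_pow2 d0u Du by blast
  note iu = intunit[OF w]
  show "a\<^sup>2 - 4 * b \<noteq> 0" "v (a\<^sup>2 - 4 * b) = 2" using unit_pw[OF iu(1,2)] disc_pw by auto
  show "chi (u (a\<^sup>2 - 4 * b)) = Legendre D P" using unit_pw[OF iu(1,2)] disc_pw iu(3) L_d0D by simp
qed

lemma vge_of_int0: "vge (of_int c :: rat) 0" using vge_int'[of c 0] by simp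

lemma vge_a: "vge a 1"
proof -
  have "vge (of_int (d0*A)) 0" by (rule vge_of_int0)
  then have "vge (of_int (d0*A) * pw 1) 1" using vge_mult_pw[of "of_int (d0*A)" 1 1] by simp
  then show ?thesis using a_pw by simp
qed

lemma vge_b: "vge (4 * b) 2"
proof -
  have e: "4 * b = of_int (4 * d0^2 * B) * pw 2" using b_pw by simp
  have "vge (of_int (4 * d0^2 * B)) 0" by (rule vge_of_int0)
  then have "vge (of_int (4 * d0^2 * B) * pw 2) 2" using vge_mult_pw[of "of_int (4 * d0^2 * B)" 2 2] by simp
  then show ?thesis unfolding e .
qed

lemma F_g: "F x = x * ((x - a)\<^sup>2 - 4 * b)"
  unfolding F_def power2_eq_square power3_eq_cube by (simp add: algebra_simps)

lemma F_g2: "F x = x * ((a\<^sup>2 - 4 * b) + x * (x - 2 * a))"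
  unfolding F_def power2_eq_square power3_eq_cube by (simp add: algebra_simps)

lemma sq_close: assumes "f \<noteq> 0" "vge (y\<^sup>2 - f) K" "K \<ge> v f + 1"
  shows "even (v f) \<and> chi (u f) = 1"
proof -
  have "vge (y\<^sup>2 - f) (v f + 1)" using vge_mono[OF assms(2,3)] .
  note c = close[OF assms(1) this]
  then have y: "y \<noteq> 0" by simp
  have "v (y\<^sup>2) = 2 * v y" using v_power[OF y, of 2] by simp
  then have e: "even (v f)" using c(2) by presburger
  have "chi (u (y * y)) = 1" using chiu_sq[OF y] .
  then have "chi (u (y\<^sup>2)) = 1" by (simp add: power2_eq_square)
  then show ?thesis using c(3) e by simp
qed

end


context cur begin

lemma u_v0: "v z = 0 \<Longrightarrow> u z = z" unfolding u_def pw_def by simp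

lemma vge2a: "vge (2 * a) 1"
proof -
  have "2 * a = a + a" by simp
  then show ?thesis using vge_add[OF vge_a vge_a] by simp
qed

lemma pt_small:
  assumes x0: "x \<noteq> 0" and v1: "v x \<noteq> 1" and y: "vge (y\<^sup>2 - F x) K" and K: "K \<ge> 3 * \<bar>v x\<bar> + 4"
  shows "even (v x) \<and> (chi (u x) = 1 \<or> chi (u x) = Legendre D P)"
proof (cases "v x \<le> 0")
  case True
  have "vge a (v x + 1)" using vge_mono[OF vge_a] True by simp
  then have "vge ((x - a) - x) (v x + 1)" by simp
  note c1 = close[OF x0 this]
  define s where "s = (x - a) * (x - a)"
  have s0: "s \<noteq> 0" "v s = 2 * v x" "chi (u s) = 1"
  proof -
    show "s \<noteq> 0" unfolding s_def using c1(1) by simp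
    show "v s = 2 * v x" unfolding s_def using v_mult[OF c1(1) c1(1)] c1(2) by simp
    show "chi (u s) = 1" unfolding s_def using chiu_sq[OF c1(1)] .
  qed
  have "v s + 1 \<le> 2" using s0 True by simp
  then have "vge (4 * b) (v s + 1)" using vge_mono[OF vge_b] by blast
  then have "vge ((s - 4 * b) - s) (v s + 1)" by simp
  note c2 = close[OF s0(1) this]
  have g: "(x - a)\<^sup>2 - 4 * b = s - 4 * b" unfolding s_def by (simp add: power2_eq_square)
  have f: "F x = x * (s - 4 * b)" using F_g g by simp
  have g0: "s - 4 * b \<noteq> 0" using c2(1) .
  have f0: "F x \<noteq> 0" "v (F x) = 3 * v x" "chi (u (F x)) = chi (u x)"
  proof -
    show "F x \<noteq> 0" unfolding f using g0 x0 by simp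
    show "v (F x) = 3 * v x" unfolding f using v_mult[OF x0 g0] c2(2) s0(2) by simp
    show "chi (u (F x)) = chi (u x)" unfolding f using chiu_mult[OF x0 g0] c2(3) s0(3) by simp
  qed
  have "K \<ge> v (F x) + 1" using f0 K True by simp
  note sc = sq_close[OF f0(1) y this]
  then show ?thesis using f0 by simp
next
  case False
  then have vx: "v x \<ge> 2" using v1 by simp
  have "vge x 1" "vge x 2" using vx x0 by (auto simp: vge_def)
  then have "vge (x - 2 * a) 1" using vge_diff vge2a by blast
  then have "vge (x * (x - 2 * a)) (2 + 1)" using vge_mult \<open>vge x 2\<close> by blast
  then have "vge (((a\<^sup>2 - 4 * b) + x * (x - 2 * a)) - (a\<^sup>2 - 4 * b)) (v (a\<^sup>2 - 4 * b) + 1)" using disc_unit by simp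
  note c2 = close[OF disc_unit(1) this]
  define g where "g = (a\<^sup>2 - 4 * b) + x * (x - 2 * a)"
  have g0: "g \<noteq> 0" "v g = 2" "chi (u g) = Legendre D P" using c2 disc_unit unfolding g_def by auto
  have f0: "F x \<noteq> 0" "v (F x) = v x + 2" "chi (u (F x)) = chi (u x) * Legendre D P"
  proof -
    have f: "F x = x * g" using F_g2 unfolding g_def .
    show "F x \<noteq> 0" unfolding f using g0 x0 by simp
    show "v (F x) = v x + 2" unfolding f using v_mult[OF x0 g0(1)] g0 by simp
    show "chi (u (F x)) = chi (u x) * Legendre D P" unfolding f using chiu_mult[OF x0 g0(1)] g0 by simp
  qed
  have "K \<ge> v (F x) + 1" using f0 K vx by simp
  note sc = sq_close[OF f0(1) y this]
  have ev: "even (v x)" using sc f0 by simp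
  have "Legendre D P = 1 \<or> Legendre D P = -1" using L_unit_pm[OF Du] .
  then have "chi (u x) = Legendre D P" using sc f0 by auto
  then show ?thesis using ev by simp
qed

definition w0 :: "rat \<Rightarrow> rat" where "w0 x = u x - of_int (d0 * A)"

lemma pt_one_core:
  assumes x0: "x \<noteq> 0" and v1: "v x = 1" and y: "vge (y\<^sup>2 - F x) K" and K: "K \<ge> 5"
  shows "vge ((w0 x)\<^sup>2 - of_int (4 * d0^2 * B)) 1"
proof -
  define g where "g = (a\<^sup>2 - 4 * b) + x * (x - 2 * a)"
  have "vge x 1" using v1 x0 by (simp add: vge_def)
  then have "vge (x - 2 * a) 1" using vge_diff vge2a by blast
  then have t: "vge (x * (x - 2 * a)) (1 + 1)" using vge_mult \<open>vge x 1\<close> by blast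
  have "vge (a\<^sup>2 - 4 * b) 2" using disc_unit by (simp add: vge_def)
  then have g2: "vge g 2" unfolding g_def using vge_add t by simp
  have g3: "vge g 3"
  proof (rule ccontr)
    assume n3: "\<not> vge g 3"
    then have g0: "g \<noteq> 0" "v g = 2" using g2 by (auto simp: vge_def)
    have f0: "F x \<noteq> 0" "v (F x) = 3" using F_g2 g0 x0 v1 v_mult unfolding g_def by auto
    have "K \<ge> v (F x) + 1" using f0 K by simp
    note sc = sq_close[OF f0(1) y this]
    then show False using f0 by simp
  qed
  have xd: "x = u x * pw 1" using u_decomp[of x] v1 by simp
  have p21: "pw 2 = pw 1 * pw 1" using pw_add[of 1 1] by simp
  have "g = (x - a)\<^sup>2 - 4 * b" unfolding g_def by (simp add: power2_eq_square algebra_simps)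
  also have "\<dots> = ((w0 x)\<^sup>2 - of_int (4 * d0^2 * B)) * pw 2"
    unfolding w0_def using xd a_pw b_pw p21
    by (simp add: power2_eq_square algebra_simps)
  finally have "vge (((w0 x)\<^sup>2 - of_int (4 * d0^2 * B)) * pw 2) 3" using g3 by simp
  then show ?thesis using vge_mult_pw by simp
qed

lemma vge_u: "x \<noteq> 0 \<Longrightarrow> vge (u x) 0" using v_u by (simp add: vge_def)

lemma w0_vge: "x \<noteq> 0 \<Longrightarrow> vge (w0 x) 0"
  unfolding w0_def using vge_diff[OF vge_u vge_of_int0] by blast

lemma c4u: "\<not> P dvd 4 * d0^2 * B"
  using nd_mult[OF nd_mult[OF P_not4 nd_pow2[OF d0u]] Bu] .

lemma pt_one_nonsq:
  assumes x0: "x \<noteq> 0" and v1: "v x = 1" and y: "vge (y\<^sup>2 - F x) K" and K: "K \<ge> 5"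
    and LB: "Legendre B P = -1"
  shows False
proof -
  note core = pt_one_core[OF x0 v1 y K]
  define w where "w = w0 x"
  define c where "c = (of_int (4 * d0^2 * B) :: rat)"
  note cu = intunit[OF c4u]
  have Lc: "Legendre (4 * d0^2 * B) P = Legendre B P"
  proof -
    have "Legendre (4 * d0^2 * B) P = Legendre ((2 * d0)^2 * B) P" by (simp add: power_mult_distrib)
    also have "\<dots> = Legendre B P" using L_mult L_sq[OF nd_mult[OF P_not2 d0u]] by simp
    finally show ?thesis .
  qed
  show False
  proof (cases "vge w 1")
    case True
    then have "vge (w * w) (1 + 1)" using vge_mult by blast
    then have "vge (w\<^sup>2) 1" using vge_mono[of "w*w" 2 1] by (simp add: power2_eq_square)
    moreover have "vge (w\<^sup>2 - c) 1" using core unfolding w_def c_def .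
    ultimately have "vge (w\<^sup>2 - (w\<^sup>2 - c)) 1" by (rule vge_diff)
    then have "vge c 1" by simp
    then show False using cu unfolding c_def by (simp add: vge_def)
  next
    case False
    have "vge w 0" unfolding w_def using w0_vge[OF x0] .
    then have w: "w \<noteq> 0" "v w = 0" using False by (auto simp: vge_def)
    have ww: "w * w \<noteq> 0" "v (w * w) = 0" using w v_mult by auto
    have "vge (w * w - c) 1" using core unfolding w_def c_def by (simp add: power2_eq_square)
    have "chi (w * w) = chi c" using chi_cong[OF ww(1,2) cu(1,2) \<open>vge (w * w - c) 1\<close>[unfolded c_def]] unfolding c_def .
    moreover have "chi (w * w) = 1" using chi_sq w by blast
    moreover have "chi c = -1" using cu Lc LB unfolding c_def by simp
    ultimately show False by simp
  qed
qed

end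


context cur begin

lemma sig_unit: assumes "vge (\<sigma>\<^sup>2 - of_int B) 1" shows "\<sigma> \<noteq> 0" "v \<sigma> = 0"
proof -
  note bu = intunit[OF Bu]
  have "vge (\<sigma>\<^sup>2 - of_int B) (v (of_int B) + 1)" using assms bu by simp
  note c = close[OF bu(1) this]
  then show s0: "\<sigma> \<noteq> 0" by simp
  have "v (\<sigma>\<^sup>2) = 2 * v \<sigma>" using v_power[OF s0, of 2] by simp
  then show "v \<sigma> = 0" using c bu by simp
qed

definition tp :: "rat \<Rightarrow> rat" where "tp \<sigma> = of_int d0 * (of_int A + 2 * \<sigma>)"
definition tm :: "rat \<Rightarrow> rat" where "tm \<sigma> = of_int d0 * (of_int A - 2 * \<sigma>)"

lemma vge_2s: "v s = 0 \<Longrightarrow> vge (2 * s) 0"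
proof -
  assume "v s = 0"
  then have "vge s 0" by (simp add: vge_def)
  moreover have "2 * s = s + s" by simp
  ultimately show ?thesis using vge_add by metis
qed

lemma tpm: assumes sg: "vge (\<sigma>\<^sup>2 - of_int B) 1"
  shows "tp \<sigma> \<noteq> 0" "v (tp \<sigma>) = 0" "tm \<sigma> \<noteq> 0" "v (tm \<sigma>) = 0" "chi (tp \<sigma>) * chi (tm \<sigma>) = Legendre D P"
proof -
  note su = sig_unit[OF sg]
  have cw: "\<not> P dvd d0^2 * D" using nd_mult nd_pow2 d0u Du by blast
  note cu = intunit[OF cw]
  define c0 where "c0 = (of_int (d0^2 * D) :: rat)"
  have e: "tp \<sigma> * tm \<sigma> - c0 = of_int (- 4 * d0^2) * (\<sigma>\<^sup>2 - of_int B)"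
    unfolding tp_def tm_def c0_def by (simp add: power2_eq_square algebra_simps)
  have "vge (of_int (- 4 * d0^2) * (\<sigma>\<^sup>2 - of_int B)) (0 + 1)" using vge_mult[OF vge_of_int0 sg] .
  then have "vge (tp \<sigma> * tm \<sigma> - c0) (v c0 + 1)" using e cu unfolding c0_def by simp
  note c = close[OF cu(1)[folded c0_def] this]
  have pr0: "tp \<sigma> * tm \<sigma> \<noteq> 0" "v (tp \<sigma> * tm \<sigma>) = 0" using c cu unfolding c0_def by auto
  then show t0: "tp \<sigma> \<noteq> 0" "tm \<sigma> \<noteq> 0" by auto
  have "vge (of_int A + 2 * \<sigma>) 0" using vge_add[OF vge_of_int0 vge_2s[OF su(2)]] .
  then have "vge (tp \<sigma>) (0 + 0)" unfolding tp_def using vge_mult[OF vge_of_int0] by blast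
  then have g1: "v (tp \<sigma>) \<ge> 0" using t0 by (simp add: vge_def)
  have "vge (of_int A - 2 * \<sigma>) 0" using vge_diff[OF vge_of_int0 vge_2s[OF su(2)]] .
  then have "vge (tm \<sigma>) (0 + 0)" unfolding tm_def using vge_mult[OF vge_of_int0] by blast
  then have g2: "v (tm \<sigma>) \<ge> 0" using t0 by (simp add: vge_def)
  have "v (tp \<sigma>) + v (tm \<sigma>) = 0" using pr0 v_mult[OF t0] by simp
  then show v0: "v (tp \<sigma>) = 0" "v (tm \<sigma>) = 0" using g1 g2 by auto
  have "chi (u (tp \<sigma> * tm \<sigma>)) = chi (u c0)" using c by simp
  then have "chi (tp \<sigma> * tm \<sigma>) = chi c0" using u_v0 pr0 cu unfolding c0_def by simp
  also have "\<dots> = Legendre D P" unfolding c0_def using cu L_d0D by simp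
  finally show "chi (tp \<sigma>) * chi (tm \<sigma>) = Legendre D P" using chi_mult[OF t0(1) v0(1) t0(2) v0(2)] by simp
qed

lemma pt_one_sq:
  assumes x0: "x \<noteq> 0" and v1: "v x = 1" and y: "vge (y\<^sup>2 - F x) K" and K: "K \<ge> 5"
    and LD: "Legendre D P = 1" and sg: "vge (\<sigma>\<^sup>2 - of_int B) 1"
  shows "chi (u x) = chi (tp \<sigma>)"
proof -
  note core = pt_one_core[OF x0 v1 y K]
  note su = sig_unit[OF sg]
  note tt = tpm[OF sg]
  define w where "w = w0 x"
  have ux: "u x \<noteq> 0" "v (u x) = 0" using u_nz v_u x0 by auto
  have e1: "(w - 2 * of_int d0 * \<sigma>) * (w + 2 * of_int d0 * \<sigma>) = (w\<^sup>2 - of_int (4 * d0^2 * B)) - of_int (4 * d0^2) * (\<sigma>\<^sup>2 - of_int B)"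
    by (simp add: power2_eq_square algebra_simps)
  have "vge (of_int (4 * d0^2) * (\<sigma>\<^sup>2 - of_int B)) (0 + 1)" using vge_mult[OF vge_of_int0 sg] .
  then have prod: "vge ((w - 2 * of_int d0 * \<sigma>) * (w + 2 * of_int d0 * \<sigma>)) 1"
    unfolding e1 using vge_diff core unfolding w_def by simp
  have vw: "vge w 0" unfolding w_def using w0_vge[OF x0] .
  have vds: "vge (2 * of_int d0 * \<sigma>) 0"
  proof -
    have "vge \<sigma> 0" using su by (simp add: vge_def)
    then have "vge (of_int (2 * d0) * \<sigma>) (0 + 0)" using vge_mult[OF vge_of_int0] by blast
    moreover have "(of_int (2 * d0) * \<sigma> :: rat) = 2 * of_int d0 * \<sigma>" by simp
    ultimately show ?thesis by simp
  qed
  have f1: "vge (w - 2 * of_int d0 * \<sigma>) 0" using vge_diff[OF vw vds] .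
  have f2: "vge (w + 2 * of_int d0 * \<sigma>) 0" using vge_add[OF vw vds] .
  have wx: "u x = w + of_int (d0 * A)" unfolding w_def w0_def by simp
  have one: "vge (w - 2 * of_int d0 * \<sigma>) 1 \<or> vge (w + 2 * of_int d0 * \<sigma>) 1"
  proof (rule ccontr)
    assume "\<not> ?thesis"
    then have h: "w - 2 * of_int d0 * \<sigma> \<noteq> 0" "v (w - 2 * of_int d0 * \<sigma>) = 0"
      "w + 2 * of_int d0 * \<sigma> \<noteq> 0" "v (w + 2 * of_int d0 * \<sigma>) = 0" using f1 f2 by (auto simp: vge_def)
    then have "v ((w - 2 * of_int d0 * \<sigma>) * (w + 2 * of_int d0 * \<sigma>)) = 0" using v_mult[OF h(1) h(3)] by simp
    then show False using prod h by (simp add: vge_def)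
  qed
  show ?thesis
  proof (cases "vge (w - 2 * of_int d0 * \<sigma>) 1")
    case True
    have "u x - tp \<sigma> = w - 2 * of_int d0 * \<sigma>" unfolding wx tp_def by (simp add: algebra_simps)
    then have "vge (u x - tp \<sigma>) (v (tp \<sigma>) + 1)" using True tt by simp
    note c = close[OF tt(1) this]
    then show ?thesis using u_v0 ux tt by simp
  next
    case False
    then have T: "vge (w + 2 * of_int d0 * \<sigma>) 1" using one by blast
    have "u x - tm \<sigma> = w + 2 * of_int d0 * \<sigma>" unfolding wx tm_def by (simp add: algebra_simps)
    then have "vge (u x - tm \<sigma>) (v (tm \<sigma>) + 1)" using T tt by simp
    note c = close[OF tt(3) this]
    then have "chi (u x) = chi (tm \<sigma>)" using u_v0 ux tt by simp
    moreover have "chi (tp \<sigma>) = 1 \<or> chi (tp \<sigma>) = -1" using chi_pm tt by blast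
    ultimately show ?thesis using tt(5) LD by auto
  qed
qed

lemma T_val: assumes sg: "vge (\<sigma>\<^sup>2 - of_int B) 1"
  shows "of_int (int p * d0) * (of_int A + 2 * \<sigma>) \<noteq> 0" "v (of_int (int p * d0) * (of_int A + 2 * \<sigma>)) = 1"
    "u (of_int (int p * d0) * (of_int A + 2 * \<sigma>)) = tp \<sigma>"
proof -
  note tt = tpm[OF sg]
  have e: "of_int (int p * d0) * (of_int A + 2 * \<sigma>) = tp \<sigma> * pw 1" unfolding tp_def pw1 by simp
  show "of_int (int p * d0) * (of_int A + 2 * \<sigma>) \<noteq> 0" "v (of_int (int p * d0) * (of_int A + 2 * \<sigma>)) = 1"
    "u (of_int (int p * d0) * (of_int A + 2 * \<sigma>)) = tp \<sigma>" unfolding e using unit_pw[OF tt(1,2)] by auto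
qed

end


context cur begin

lemma cls1: "cls (Qp_const 1) True 1"
proof -
  have "chi 1 = 1" using intunit[of 1] P2 L_sq[of 1] by simp
  then show ?thesis using cls_const[of 1] u_v0[of 1] by simp
qed

lemma cls_int: "\<not> P dvd w \<Longrightarrow> cls (Qp_const (of_int w)) True (Legendre w P)"
  using cls_const[of "of_int w"] intunit[of w] u_v0[of "of_int w"] by simp

lemma clsD: "cls (Qp_const (a\<^sup>2 - 4 * b)) True (Legendre D P)"
  using cls_const[of "a\<^sup>2 - 4 * b"] disc_unit by simp

lemma units_const: "c \<noteq> 0 \<Longrightarrow> Qp_const c \<in> Qp_units p"
  unfolding Qp_units_iff using unit_const by simp

lemma point_seq:
  assumes pt: "(X, Y) \<in> Qp_affine_points p (-2 * a) (a\<^sup>2 - 4 * b)" and nn: "\<not> padic_null p X"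
  shows "cau X" "\<not> nul X" "\<exists>k N. \<forall>n\<ge>N. X n \<noteq> 0 \<and> v (X n) = k \<and> vge ((Y n)\<^sup>2 - F (X n)) (3 * \<bar>k\<bar> + 5)"
proof -
  have h: "padic_cauchy p X" "Qp_eq p (\<lambda>n. (Y n)\<^sup>2) (\<lambda>n. (X n)^3 + (-2 * a) * (X n)\<^sup>2 + (a\<^sup>2 - 4 * b) * X n)"
    using pt unfolding Qp_affine_points_def by auto
  show cX: "cau X" using h cauchy_iff by simp
  show nX: "\<not> nul X" using nn null_iff by simp
  have nl: "nul (\<lambda>n. (Y n)\<^sup>2 - F (X n))" using h(2) Qp_eq_iff unfolding F_def by simp
  obtain k N where kN: "\<forall>n\<ge>N. X n \<noteq> 0 \<and> v (X n) = k" using unit_val[OF cX nX] by blast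
  obtain M where M: "\<forall>n\<ge>M. vge ((Y n)\<^sup>2 - F (X n)) (3 * \<bar>k\<bar> + 5)" using nl unfolding nul_def by blast
  have "\<forall>n\<ge>max N M. X n \<noteq> 0 \<and> v (X n) = k \<and> vge ((Y n)\<^sup>2 - F (X n)) (3 * \<bar>k\<bar> + 5)" using kN M by simp
  then show "\<exists>k N. \<forall>n\<ge>N. X n \<noteq> 0 \<and> v (X n) = k \<and> vge ((Y n)\<^sup>2 - F (X n)) (3 * \<bar>k\<bar> + 5)" by blast
qed

lemma point_cls_nonsq:
  assumes pt: "(X, Y) \<in> Qp_affine_points p (-2 * a) (a\<^sup>2 - 4 * b)" and nn: "\<not> padic_null p X"
    and LB: "Legendre B P = -1" and cX: "cls X e c"
  shows "e \<and> (c = 1 \<or> c = Legendre D P)"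
proof -
  obtain k N where kN: "\<forall>n\<ge>N. X n \<noteq> 0 \<and> v (X n) = k \<and> vge ((Y n)\<^sup>2 - F (X n)) (3 * \<bar>k\<bar> + 5)"
    using point_seq[OF pt nn] by blast
  obtain N' where N': "\<forall>n\<ge>N'. X n \<noteq> 0 \<and> (even (v (X n)) \<longleftrightarrow> e) \<and> chi (u (X n)) = c" using cX unfolding cls_def by blast
  define n where "n = max N N'"
  have h1: "X n \<noteq> 0 \<and> v (X n) = k \<and> vge ((Y n)\<^sup>2 - F (X n)) (3 * \<bar>k\<bar> + 5)" using kN unfolding n_def by simp
  have h2: "(even (v (X n)) \<longleftrightarrow> e) \<and> chi (u (X n)) = c" using N' unfolding n_def by simp
  have h: "X n \<noteq> 0" "v (X n) = k" "vge ((Y n)\<^sup>2 - F (X n)) (3 * \<bar>k\<bar> + 5)" "(even (v (X n)) \<longleftrightarrow> e)" "chi (u (X n)) = c"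
    using h1 h2 by auto
  show ?thesis
  proof (cases "k = 1")
    case True
    have k5: "(3 * \<bar>k\<bar> + 5) \<ge> 5" by simp
    have "v (X n) = 1" using h(2) True by simp
    from pt_one_nonsq[OF h(1) this h(3) k5 LB] show ?thesis ..
  next
    case False
    have "3 * \<bar>k\<bar> + 5 \<ge> 3 * \<bar>v (X n)\<bar> + 4" using h(2) by simp
    note ps = pt_small[OF h(1) _ h(3) this]
    have "v (X n) \<noteq> 1" using h(2) False by simp
    then have "even (v (X n)) \<and> (chi (u (X n)) = 1 \<or> chi (u (X n)) = Legendre D P)" using ps by blast
    then show ?thesis using h(4) h(5) by auto
  qed
qed

definition Tq :: "(nat \<Rightarrow> rat) \<Rightarrow> nat \<Rightarrow> rat" where
  "Tq s n = of_int (int p * d0) * (of_int A + 2 * s n)"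

lemma T_seq: assumes cs: "cau s" and ns: "nul (\<lambda>n. (s n)\<^sup>2 - of_int B)"
  shows "cau (Tq s)" "\<not> nul (Tq s)" "\<exists>N. \<forall>n\<ge>N. vge ((s n)\<^sup>2 - of_int B) 1"
    "\<exists>c. cls (Tq s) False c \<and> (\<exists>N. \<forall>n\<ge>N. chi (tp (s n)) = c)"
proof -
  show "\<exists>N. \<forall>n\<ge>N. vge ((s n)\<^sup>2 - of_int B) 1" using spec[OF ns[unfolded nul_def], of 1] .
  then obtain N where N: "\<forall>n\<ge>N. vge ((s n)\<^sup>2 - of_int B) 1" by blast
  have "cau (\<lambda>n. of_int A + 2 * s n)" using cau_add[OF cau_const cau_mult[OF cau_const cs]] .
  note cm = cau_mult[OF cau_const this, of "of_int (int p * d0)"]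
  have "Tq s = (\<lambda>n. of_int (int p * d0) * (of_int A + 2 * s n))" by (rule ext) (simp add: Tq_def)
  then show cT: "cau (Tq s)" using cm by simp
  have tv: "Tq s n \<noteq> 0 \<and> v (Tq s n) = 1 \<and> u (Tq s n) = tp (s n)" if "n \<ge> N" for n
  proof -
    have "vge ((s n)\<^sup>2 - of_int B) 1" using N that by simp
    note tv0 = T_val[OF this]
    then show ?thesis unfolding Tq_def by simp
  qed
  show nT: "\<not> nul (Tq s)"
  proof
    assume "nul (Tq s)"
    then obtain M where "\<forall>n\<ge>M. vge (Tq s n) 2" unfolding nul_def by blast
    then have "vge (Tq s (max M N)) 2" by simp
    then show False using tv[of "max M N"] by (simp add: vge_def)
  qed
  obtain e c where ec: "cls (Tq s) e c" using cls_exists[OF cT nT] by blast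
  then obtain N' where N': "\<forall>n\<ge>N'. Tq s n \<noteq> 0 \<and> (even (v (Tq s n)) \<longleftrightarrow> e) \<and> chi (u (Tq s n)) = c"
    unfolding cls_def by blast
  define m where "m = max N N'"
  have m1: "(even (v (Tq s m)) \<longleftrightarrow> e)" using N' unfolding m_def by simp
  have m2: "v (Tq s m) = 1" using tv[of m] unfolding m_def by simp
  have ne: "e = False" using m1 m2 by simp
  have cc: "chi (tp (s n)) = c" if "n \<ge> m" for n
  proof -
    have "chi (u (Tq s n)) = c" using N' that unfolding m_def by simp
    moreover have "u (Tq s n) = tp (s n)" using tv[of n] that unfolding m_def by simp
    ultimately show ?thesis by simp
  qed
  have "cls (Tq s) False c" using ec unfolding ne .
  moreover have "\<exists>N. \<forall>n\<ge>N. chi (tp (s n)) = c" using cc by blast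
  ultimately show "\<exists>c. cls (Tq s) False c \<and> (\<exists>N. \<forall>n\<ge>N. chi (tp (s n)) = c)" by blast
qed

lemma T_point: assumes cs: "cau s" and ns: "nul (\<lambda>n. (s n)\<^sup>2 - of_int B)"
  shows "(Tq s, \<lambda>n. 0) \<in> Qp_affine_points p (-2 * a) (a\<^sup>2 - 4 * b)" "\<not> padic_null p (Tq s)"
proof -
  note ts = T_seq[OF cs ns]
  show "\<not> padic_null p (Tq s)" using ts null_iff by simp
  define cc where "cc = (of_int (4 * (int p * d0)^2) :: rat)"
  have e: "F (Tq s n) = ((s n)\<^sup>2 - of_int B) * (Tq s n * cc)" for n
  proof -
    have "Tq s n - a = of_int (int p * d0) * (2 * s n)" unfolding Tq_def a_def by (simp add: algebra_simps)
    then have eq: "(Tq s n - a)\<^sup>2 - 4 * b = cc * ((s n)\<^sup>2 - of_int B)"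
      unfolding b_def cc_def by (simp add: power2_eq_square algebra_simps)
    show ?thesis unfolding F_g eq by (simp only: ac_simps)
  qed
  have "bdd (\<lambda>n. Tq s n * cc)" using bdd_mult[OF cau_bdd[OF ts(1)] bdd_const] .
  then have "nul (\<lambda>n. - (((s n)\<^sup>2 - of_int B) * (Tq s n * cc)))"
    by (rule nul_uminus[OF nul_mult[OF ns]])
  moreover have "(\<lambda>n. 0\<^sup>2 - F (Tq s n)) = (\<lambda>n. - (((s n)\<^sup>2 - of_int B) * (Tq s n * cc)))" by (simp add: e)
  ultimately have "nul (\<lambda>n. 0\<^sup>2 - F (Tq s n))" by simp
  then have "Qp_eq p (\<lambda>n. ((\<lambda>n. 0::rat) n)\<^sup>2) (\<lambda>n. (Tq s n)^3 + (-2 * a) * (Tq s n)\<^sup>2 + (a\<^sup>2 - 4 * b) * Tq s n)"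
    unfolding Qp_eq_iff F_def[symmetric] by simp
  moreover have "padic_cauchy p (Tq s)" using ts(1) cauchy_iff by simp
  moreover have "padic_cauchy p (\<lambda>n. 0)" using cau_const[of 0] cauchy_iff by simp
  ultimately show "(Tq s, \<lambda>n. 0) \<in> Qp_affine_points p (-2 * a) (a\<^sup>2 - 4 * b)"
    unfolding Qp_affine_points_def by simp
qed

lemma point_cls_sq:
  assumes pt: "(X, Y) \<in> Qp_affine_points p (-2 * a) (a\<^sup>2 - 4 * b)" and nn: "\<not> padic_null p X"
    and LD: "Legendre D P = 1" and cs: "cau s" and ns: "nul (\<lambda>n. (s n)\<^sup>2 - of_int B)" and cX: "cls X e c"
  shows "(e \<and> c = 1) \<or> cls (Tq s) e c"
proof -
  obtain k N where kN: "\<forall>n\<ge>N. X n \<noteq> 0 \<and> v (X n) = k \<and> vge ((Y n)\<^sup>2 - F (X n)) (3 * \<bar>k\<bar> + 5)"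
    using point_seq[OF pt nn] by blast
  obtain N' where N': "\<forall>n\<ge>N'. X n \<noteq> 0 \<and> (even (v (X n)) \<longleftrightarrow> e) \<and> chi (u (X n)) = c" using cX unfolding cls_def by blast
  note ts = T_seq[OF cs ns]
  obtain N2 where N2: "\<forall>n\<ge>N2. vge ((s n)\<^sup>2 - of_int B) 1" using ts(3) by blast
  obtain c' N3 where c': "cls (Tq s) False c'" "\<forall>n\<ge>N3. chi (tp (s n)) = c'" using ts(4) by blast
  define n where "n = max (max N N') (max N2 N3)"
  have h1: "X n \<noteq> 0 \<and> v (X n) = k \<and> vge ((Y n)\<^sup>2 - F (X n)) (3 * \<bar>k\<bar> + 5)" using kN unfolding n_def by simp
  have h2: "(even (v (X n)) \<longleftrightarrow> e) \<and> chi (u (X n)) = c" using N' unfolding n_def by simp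
  have h3: "vge ((s n)\<^sup>2 - of_int B) 1" "chi (tp (s n)) = c'" using N2 c'(2) unfolding n_def by auto
  have h: "X n \<noteq> 0" "v (X n) = k" "vge ((Y n)\<^sup>2 - F (X n)) (3 * \<bar>k\<bar> + 5)" "(even (v (X n)) \<longleftrightarrow> e)" "chi (u (X n)) = c"
    "vge ((s n)\<^sup>2 - of_int B) 1" "chi (tp (s n)) = c'"
    using h1 h2 h3 by auto
  show ?thesis
  proof (cases "k = 1")
    case True
    have k5: "(3 * \<bar>k\<bar> + 5) \<ge> 5" by simp
    have "v (X n) = 1" using h(2) True by simp
    from pt_one_sq[OF h(1) this h(3) k5 LD h(6)] have "chi (u (X n)) = chi (tp (s n))" .
    then have "c = c'" "\<not> e" using h True by auto
    then show ?thesis using c'(1) by simp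
  next
    case False
    have "3 * \<bar>k\<bar> + 5 \<ge> 3 * \<bar>v (X n)\<bar> + 4" using h(2) by simp
    note ps = pt_small[OF h(1) _ h(3) this]
    have "v (X n) \<noteq> 1" using h(2) False by simp
    then have "even (v (X n)) \<and> (chi (u (X n)) = 1 \<or> chi (u (X n)) = Legendre D P)" using ps by blast
    then show ?thesis using h(4) h(5) LD by auto
  qed
qed

end


context cur begin


lemma unit_cls: "z \<in> Qp_units p \<Longrightarrow> \<exists>e c. cls z e c \<and> (c = 1 \<or> c = -1)"
  using cls_exists Qp_units_iff by simp

lemma equiv_cls: "z \<in> Qp_units p \<Longrightarrow> Z \<in> Qp_units p \<Longrightarrow> cls z e c \<Longrightarrow> cls Z e c \<Longrightarrow> sq_equiv p z Z"
  unfolding Qp_units_iff using cls_sq_equiv by blast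

lemma W_cls:
  assumes uW: "z \<in> kummer_image p a b" and cu: "cls z e c"
  shows "(e \<and> c = 1) \<or> (e \<and> c = Legendre D P) \<or>
    (\<exists>X Y. (X, Y) \<in> Qp_affine_points p (-2 * a) (a\<^sup>2 - 4 * b) \<and> \<not> padic_null p X \<and> cls X e c)"
proof -
  have m: "sq_equiv p z (Qp_const 1) \<or> sq_equiv p z (Qp_const (a\<^sup>2 - 4 * b)) \<or>
    (\<exists>(X, Y)\<in>Qp_affine_points p (-2 * a) (a\<^sup>2 - 4 * b). \<not> padic_null p X \<and> sq_equiv p z X)"
    using uW unfolding kummer_image_def by blast
  show ?thesis
  proof (cases "sq_equiv p z (Qp_const 1)")
    case True
    have "cls z True 1" using sq_equiv_cls[OF True cls1] .
    then show ?thesis using cls_unique[OF cu] by blast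
  next
    case F1: False
    show ?thesis
    proof (cases "sq_equiv p z (Qp_const (a\<^sup>2 - 4 * b))")
      case True
      have "cls z True (Legendre D P)" using sq_equiv_cls[OF True clsD] .
      then show ?thesis using cls_unique[OF cu] by blast
    next
      case False
      then obtain X Y where XY: "(X, Y) \<in> Qp_affine_points p (-2 * a) (a\<^sup>2 - 4 * b)" "\<not> padic_null p X" "sq_equiv p z X"
        using m F1 by blast
      have "X \<in> Qp_units p" using XY(3) unfolding sq_equiv_def by blast
      then obtain e' c' where ec: "cls X e' c'" using unit_cls by blast
      have "cls z e' c'" using sq_equiv_cls[OF XY(3) ec] .
      then have "e' = e" "c' = c" using cls_unique[OF cu] by auto
      then show ?thesis using XY ec by blast
    qed
  qed
qed

lemma padic_abs_1: "padic_abs p q = 1 \<Longrightarrow> q \<noteq> 0 \<and> v q = 0"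
proof -
  assume h: "padic_abs p q = 1"
  then have q: "q \<noteq> 0" by (auto simp: padic_abs_def split: if_splits)
  then have "real p powr (- real_of_int (v q)) = real p powr 0" using h p2 by (simp add: padic_abs_def)
  then have "- real_of_int (v q) = 0" using p1 powr_inj[of "real p"] by simp
  then show ?thesis using q by simp
qed

lemma zp_cls: assumes "X \<in> Zp_units p" shows "X \<in> Qp_units p" "\<exists>c. cls X True c \<and> (c = 1 \<or> c = -1)"
proof -
  obtain N where N: "\<forall>n\<ge>N. padic_abs p (X n) = 1" and cX: "padic_cauchy p X" using assms unfolding Zp_units_def by blast
  have h: "X n \<noteq> 0 \<and> v (X n) = 0" if "n \<ge> N" for n using padic_abs_1 N that by blast
  have nn: "\<not> nul X"
  proof
    assume "nul X"
    then obtain M where "\<forall>n\<ge>M. vge (X n) 1" unfolding nul_def by blast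
    then have "vge (X (max M N)) 1" by simp
    then show False using h[of "max M N"] by (simp add: vge_def)
  qed
  have cc: "cau X" using cX cauchy_iff by simp
  show "X \<in> Qp_units p" using cc nn Qp_units_iff by simp
  obtain e c where ec: "cls X e c" "c = 1 \<or> c = -1" using cls_exists[OF cc nn] by blast
  then obtain N' where N': "\<forall>n\<ge>N'. X n \<noteq> 0 \<and> (even (v (X n)) \<longleftrightarrow> e) \<and> chi (u (X n)) = c" unfolding cls_def by blast
  have "even (v (X (max N N'))) \<longleftrightarrow> e" using N' by simp
  moreover have "v (X (max N N')) = 0" using h by simp
  ultimately have "e = True" by simp
  then show "\<exists>c. cls X True c \<and> (c = 1 \<or> c = -1)" using ec by blast
qed

lemma const_zp: assumes "\<not> P dvd w" shows "Qp_const (of_int w) \<in> Zp_units p"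
proof -
  have "padic_abs p (of_int w) = 1" using intunit[OF assms] p2 by (simp add: padic_abs_def)
  then show ?thesis unfolding Zp_units_def Qp_const_def using cau_const cauchy_iff by auto
qed

lemma W_intro: "z \<in> Qp_units p \<Longrightarrow> sq_equiv p z (Qp_const 1) \<or> sq_equiv p z (Qp_const (a\<^sup>2 - 4 * b)) \<or>
    (\<exists>X Y. (X, Y) \<in> Qp_affine_points p (-2 * a) (a\<^sup>2 - 4 * b) \<and> \<not> padic_null p X \<and> sq_equiv p z X) \<Longrightarrow> z \<in> kummer_image p a b"
  unfolding kummer_image_def by blast

lemma unitsD: "cls (Qp_const (a\<^sup>2 - 4 * b)) True (Legendre D P) \<and> Qp_const (a\<^sup>2 - 4 * b) \<in> Qp_units p"
  using clsD units_const disc_unit by simp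

lemma type2: assumes LD: "Legendre D P = 1" and LB: "Legendre B P = -1"
  shows "kummer_image p a b = {z \<in> Qp_units p. sq_equiv p z (Qp_const 1)}"
proof (rule equalityI; rule subsetI)
  fix z assume uW: "z \<in> kummer_image p a b"
  then have uu: "z \<in> Qp_units p" unfolding kummer_image_def by blast
  obtain e c where ec: "cls z e c" using unit_cls[OF uu] by blast
  have "e \<and> c = 1" using W_cls[OF uW ec] point_cls_nonsq LB LD by fastforce
  then have "cls z True 1" using ec by simp
  then have "sq_equiv p z (Qp_const 1)" using equiv_cls[OF uu units_const[of 1] _ cls1] by simp
  then show "z \<in> {z \<in> Qp_units p. sq_equiv p z (Qp_const 1)}" using uu by simp
next
  fix z assume "z \<in> {z \<in> Qp_units p. sq_equiv p z (Qp_const 1)}"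
  then show "z \<in> kummer_image p a b" using W_intro by simp
qed

end


context cur begin

lemma type4: assumes LD: "Legendre D P = -1" and LB: "Legendre B P = -1"
  shows "kummer_image p a b = {z \<in> Qp_units p. \<exists>w \<in> Zp_units p. sq_equiv p z w}"
proof (rule equalityI; rule subsetI)
  fix z assume uW: "z \<in> kummer_image p a b"
  then have uu: "z \<in> Qp_units p" unfolding kummer_image_def by blast
  obtain e c where ec: "cls z e c" "c = 1 \<or> c = -1" using unit_cls[OF uu] by blast
  have "e \<and> (c = 1 \<or> c = Legendre D P)" using W_cls[OF uW ec(1)] point_cls_nonsq LB by fastforce
  then have "e" "c = 1 \<or> c = -1" using LD by auto
  then show "z \<in> {z \<in> Qp_units p. \<exists>w \<in> Zp_units p. sq_equiv p z w}"
  proof (cases "c = 1")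
    case True
    have "sq_equiv p z (Qp_const 1)" using equiv_cls[OF uu units_const[of 1] _ cls1] ec \<open>e\<close> True by simp
    moreover have "Qp_const 1 \<in> Zp_units p" using const_zp[of 1] P2 by simp
    ultimately show ?thesis using uu by blast
  next
    case False
    then have c: "c = -1" using \<open>c = 1 \<or> c = -1\<close> by simp
    have cD: "cls (Qp_const (of_int D)) True (-1)" using cls_int[OF Du] LD by simp
    have "Qp_const (of_int D) \<in> Qp_units p" using units_const intunit[OF Du] by simp
    then have "sq_equiv p z (Qp_const (of_int D))" using equiv_cls[OF uu _ _ cD] ec \<open>e\<close> c by simp
    moreover have "Qp_const (of_int D) \<in> Zp_units p" using const_zp[OF Du] .
    ultimately show ?thesis using uu by blast
  qed
next
  fix z assume "z \<in> {z \<in> Qp_units p. \<exists>w \<in> Zp_units p. sq_equiv p z w}"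
  then obtain w where uu: "z \<in> Qp_units p" and w: "w \<in> Zp_units p" "sq_equiv p z w" by blast
  obtain c where cw: "cls w True c" "c = 1 \<or> c = -1" using zp_cls[OF w(1)] by blast
  have cz: "cls z True c" using sq_equiv_cls[OF w(2) cw(1)] .
  show "z \<in> kummer_image p a b"
  proof (cases "c = 1")
    case True
    have "sq_equiv p z (Qp_const 1)" using equiv_cls[OF uu units_const[of 1] _ cls1] cz True by simp
    then show ?thesis using W_intro uu by blast
  next
    case False
    then have "c = Legendre D P" using cw LD by simp
    then have "sq_equiv p z (Qp_const (a\<^sup>2 - 4 * b))" using equiv_cls[OF uu _ cz] unitsD by simp
    then show ?thesis using W_intro uu by blast
  qed
qed

lemma type1: assumes LD: "Legendre D P = 1" and cs: "padic_cauchy p s"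
  and sB: "Qp_eq p (\<lambda>n. (s n)\<^sup>2) (Qp_const (of_int B))"
  shows "kummer_image p a b = {z \<in> Qp_units p. sq_equiv p z (Qp_const 1) \<or> sq_equiv p z (Tq s)}"
proof -
  have cs': "cau s" using cs cauchy_iff by simp
  have ns: "nul (\<lambda>n. (s n)\<^sup>2 - of_int B)" using sB Qp_eq_iff unfolding Qp_const_def by simp
  note ts = T_seq[OF cs' ns]
  note tpt = T_point[OF cs' ns]
  have Tu: "Tq s \<in> Qp_units p" using ts Qp_units_iff by simp
  show ?thesis
  proof (rule equalityI; rule subsetI)
    fix z assume uW: "z \<in> kummer_image p a b"
    then have uu: "z \<in> Qp_units p" unfolding kummer_image_def by blast
    obtain e c where ec: "cls z e c" "c = 1 \<or> c = -1" using unit_cls[OF uu] by blast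
    have "(e \<and> c = 1) \<or> cls (Tq s) e c"
      using W_cls[OF uW ec(1)] point_cls_sq[OF _ _ LD cs' ns] LD by fastforce
    then show "z \<in> {z \<in> Qp_units p. sq_equiv p z (Qp_const 1) \<or> sq_equiv p z (Tq s)}"
    proof
      assume "e \<and> c = 1"
      then have "sq_equiv p z (Qp_const 1)" using equiv_cls[OF uu units_const[of 1] _ cls1] ec by simp
      then show ?thesis using uu by simp
    next
      assume "cls (Tq s) e c"
      then have "sq_equiv p z (Tq s)" using equiv_cls[OF uu Tu ec(1)] by simp
      then show ?thesis using uu by simp
    qed
  next
    fix z assume "z \<in> {z \<in> Qp_units p. sq_equiv p z (Qp_const 1) \<or> sq_equiv p z (Tq s)}"
    then have uu: "z \<in> Qp_units p" and h: "sq_equiv p z (Qp_const 1) \<or> sq_equiv p z (Tq s)" by auto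
    show "z \<in> kummer_image p a b"
    proof (rule W_intro[OF uu])
      show "sq_equiv p z (Qp_const 1) \<or> sq_equiv p z (Qp_const (a\<^sup>2 - 4 * b)) \<or>
        (\<exists>X Y. (X, Y) \<in> Qp_affine_points p (-2 * a) (a\<^sup>2 - 4 * b) \<and> \<not> padic_null p X \<and> sq_equiv p z X)"
        using h tpt by blast
    qed
  qed
qed

lemma type3: assumes LD: "Legendre D P = -1" and LB: "Legendre B P = 1"
  shows "kummer_image p a b = Qp_units p"
proof (rule equalityI; rule subsetI)
  fix z assume "z \<in> kummer_image p a b"
  then show "z \<in> Qp_units p" unfolding kummer_image_def by blast
next
  fix z assume uu: "z \<in> Qp_units p"
  have cB: "cls (Qp_const (of_int B)) True 1" using cls_int[OF Bu] LB by simp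
  have "sq_equiv p (Qp_const (of_int B)) (Qp_const 1)"
    using equiv_cls[OF units_const units_const[of 1] cB cls1] intunit[OF Bu] by simp
  then obtain Z where Z: "Z \<in> Qp_units p" "Qp_eq p (Qp_const (of_int B)) (\<lambda>n. Qp_const 1 n * (Z n)\<^sup>2)"
    unfolding sq_equiv_def by blast
  have cZ: "cau Z" using Z Qp_units_iff by simp
  have nZ: "nul (\<lambda>n. (Z n)\<^sup>2 - of_int B)"
    using nul_uminus[of "\<lambda>n. of_int B - (Z n)\<^sup>2"] Z(2) Qp_eq_iff unfolding Qp_const_def by simp
  define Z' where "Z' n = - Z n" for n
  have cZ': "cau Z'" unfolding Z'_def using cau_uminus[OF cZ] .
  have nZ': "nul (\<lambda>n. (Z' n)\<^sup>2 - of_int B)" unfolding Z'_def using nZ by simp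
  obtain c1 N1 where c1: "cls (Tq Z) False c1" "\<forall>n\<ge>N1. chi (tp (Z n)) = c1" using T_seq(4)[OF cZ nZ] by blast
  obtain c2 N2 where c2: "cls (Tq Z') False c2" "\<forall>n\<ge>N2. chi (tp (Z' n)) = c2" using T_seq(4)[OF cZ' nZ'] by blast
  obtain N3 where N3: "\<forall>n\<ge>N3. vge ((Z n)\<^sup>2 - of_int B) 1" using T_seq(3)[OF cZ nZ] by blast
  define m where "m = max N1 (max N2 N3)"
  have e1: "tp (Z' m) = tm (Z m)" unfolding tp_def tm_def Z'_def by simp
  have h1: "chi (tp (Z m)) = c1" using c1(2) unfolding m_def by simp
  have h2: "chi (tp (Z' m)) = c2" using c2(2) unfolding m_def by simp
  have h3: "vge ((Z m)\<^sup>2 - of_int B) 1" using N3 unfolding m_def by simp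
  have "c1 * c2 = Legendre D P" using tpm(5)[OF h3] h1 h2 e1 by simp
  then have c12: "c1 * c2 = -1" using LD by simp
  have T1: "Tq Z \<in> Qp_units p" using T_seq(1,2)[OF cZ nZ] Qp_units_iff by simp
  have T2: "Tq Z' \<in> Qp_units p" using T_seq(1,2)[OF cZ' nZ'] Qp_units_iff by simp
  obtain e c where ec: "cls z e c" "c = 1 \<or> c = -1" using unit_cls[OF uu] by blast
  show "z \<in> kummer_image p a b"
  proof (rule W_intro[OF uu])
    show "sq_equiv p z (Qp_const 1) \<or> sq_equiv p z (Qp_const (a\<^sup>2 - 4 * b)) \<or>
        (\<exists>X Y. (X, Y) \<in> Qp_affine_points p (-2 * a) (a\<^sup>2 - 4 * b) \<and> \<not> padic_null p X \<and> sq_equiv p z X)"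
    proof (cases e)
      case True
      show ?thesis
      proof (cases "c = 1")
        case True
        then have "sq_equiv p z (Qp_const 1)" using equiv_cls[OF uu units_const[of 1] _ cls1] ec \<open>e\<close> by simp
        then show ?thesis by blast
      next
        case False
        then have "c = Legendre D P" using ec LD by simp
        then have "sq_equiv p z (Qp_const (a\<^sup>2 - 4 * b))" using equiv_cls[OF uu _ _] unitsD ec \<open>e\<close> by simp
        then show ?thesis by blast
      qed
    next
      case False
      have "c1 = 1 \<or> c1 = -1" "c2 = 1 \<or> c2 = -1" using cls_pm[OF c1(1)] cls_pm[OF c2(1)] by auto
      then have "c = c1 \<or> c = c2" using c12 ec(2) by auto
      then show ?thesis
      proof
        assume "c = c1"
        then have "sq_equiv p z (Tq Z)" using equiv_cls[OF uu T1 ec(1)] c1 False by simp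
        then show ?thesis using T_point[OF cZ nZ] by blast
      next
        assume "c = c2"
        then have "sq_equiv p z (Tq Z')" using equiv_cls[OF uu T2 ec(1)] c2 False by simp
        then show ?thesis using T_point[OF cZ' nZ'] by blast
      qed
    qed
  qed
qed

end


theorem corollary3p4:
  fixes A B d :: int and p :: nat
  assumes nonsing: "disc A B \<noteq> 0"
    and tors: "{x :: rat. x ^ 3 + of_int A * x\<^sup>2 + of_int B * x = 0} = {0}"
    and sqf: "squarefree d"
    and pr: "prime p" and pd: "int p dvd d" and cop: "coprime (int p) (2 * disc A B)"
  shows
    "(Legendre (disc A B) (int p) = 1 \<and> Legendre (disc (-2 * A) (A\<^sup>2 - 4 * B)) (int p) = 1 \<longrightarrow>
        (\<forall>s. padic_cauchy p s \<and> Qp_eq p (\<lambda>n. (s n)\<^sup>2) (Qp_const (of_int B)) \<longrightarrow>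
           W A B d p = {u \<in> Qp_units p. sq_equiv p u (Qp_const 1)
                 \<or> sq_equiv p u (\<lambda>n. of_int d * (of_int A + 2 * s n))}))
   \<and> (Legendre (disc A B) (int p) = 1 \<and> Legendre (disc (-2 * A) (A\<^sup>2 - 4 * B)) (int p) = -1 \<longrightarrow>
        W A B d p = {u \<in> Qp_units p. sq_equiv p u (Qp_const 1)})
   \<and> (Legendre (disc A B) (int p) = -1 \<and> Legendre (disc (-2 * A) (A\<^sup>2 - 4 * B)) (int p) = 1 \<longrightarrow>
        W A B d p = Qp_units p)
   \<and> (Legendre (disc A B) (int p) = -1 \<and> Legendre (disc (-2 * A) (A\<^sup>2 - 4 * B)) (int p) = -1 \<longrightarrow>
        W A B d p = {u \<in> Qp_units p. \<exists>v \<in> Zp_units p. sq_equiv p u v})"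
proof -
  have Pp: "prime (int p)" using pr by simp
  have ndisc: "\<not> int p dvd disc A B"
  proof
    assume "int p dvd disc A B"
    then have "int p dvd 2 * disc A B" by simp
    then have "is_unit (int p)" using coprime_common_divisor[OF cop dvd_refl] by blast
    then show False using Pp not_prime_unit by blast
  qed
  have n2: "\<not> int p dvd 2"
  proof
    assume "int p dvd 2"
    then have "int p dvd 2 * disc A B" by simp
    then have "is_unit (int p)" using coprime_common_divisor[OF cop dvd_refl] by blast
    then show False using Pp not_prime_unit by blast
  qed
  have p2: "p > 2"
  proof -
    have "p \<ge> 2" using pr prime_ge_2_nat by blast
    moreover have "p \<noteq> 2" using n2 by auto
    ultimately show ?thesis by simp
  qed
  have dd: "disc A B = (4 * B)^2 * (A^2 - 4 * B)" unfolding disc_def by (simp add: power2_eq_square algebra_simps)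
  have Bu: "\<not> int p dvd B"
  proof
    assume "int p dvd B" then have "int p dvd disc A B" unfolding dd by (simp add: power2_eq_square)
    then show False using ndisc by simp
  qed
  have Du: "\<not> int p dvd (A^2 - 4 * B)"
  proof
    assume "int p dvd (A^2 - 4 * B)" then have "int p dvd disc A B" unfolding dd by simp
    then show False using ndisc by simp
  qed
  obtain d0 where d0: "d = int p * d0" using pd by (auto elim: dvdE)
  have d0u: "\<not> int p dvd d0"
  proof
    assume "int p dvd d0"
    then have "(int p)^2 dvd d" unfolding d0 by (simp add: power2_eq_square mult_dvd_mono)
    then have "is_unit (int p)" using sqf unfolding squarefree_def by blast
    then show False using Pp not_prime_unit by blast
  qed
  interpret cur p A B d0
    by unfold_locales (use pr p2 Bu Du d0u in auto)
  have L1: "Legendre (disc A B) (int p) = Legendre D P"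
  proof -
    have "\<not> P dvd 4 * B" using nd_mult[OF P_not4 Bu] .
    note sq = L_sq[OF this]
    have "Legendre ((4 * B)^2 * D) P = Legendre ((4 * B)^2) P * Legendre D P" by (rule L_mult)
    then show ?thesis unfolding dd sq by simp
  qed
  have dd2: "disc (-2 * A) (A\<^sup>2 - 4 * B) = (16 * (A^2 - 4 * B))^2 * B"
    unfolding disc_def by (simp add: power2_eq_square algebra_simps)
  have L2: "Legendre (disc (-2 * A) (A\<^sup>2 - 4 * B)) (int p) = Legendre B P"
  proof -
    have "(16::int) = 4 * 4" by simp
    then have "\<not> P dvd 16" using nd_mult[OF P_not4 P_not4] by simp
    then have "\<not> P dvd 16 * (A^2 - 4 * B)" using nd_mult[OF _ Du] by blast
    note sq = L_sq[OF this]
    have "Legendre ((16 * D)^2 * B) P = Legendre ((16 * D)^2) P * Legendre B P" by (rule L_mult)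
    then show ?thesis unfolding dd2 sq by simp
  qed
  have WW: "W A B d p = kummer_image p a b" unfolding W_def a_def b_def d0 by simp
  have T: "(\<lambda>n. of_int d * (of_int A + 2 * s n)) = Tq s" for s :: "nat \<Rightarrow> rat"
    unfolding d0 by (rule ext) (simp add: Tq_def)
  show ?thesis unfolding WW L1 L2 T
    using type1 type2 type3 type4 by blast
qed


end
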